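(* Assume conditions (i), (ii), (iv), (v) of Assumption A. Then there exists a constant $C$ such that for all sufficiently small $h>0$ and all $x\in\mathbb{R}$, \[ h^{\alpha}L(1/h)|K_n(x)|+h^{\alpha+1}L(1/h)|xK_n(x)|\le C\min(1,1/x^2). \]
   Context: Model: $\nu=\alpha F$ is the Lévy measure of a compound Poisson subordinator with intensity $\alpha$ and positive jump distribution $F$; $k(x)=\nu((x,\infty))$ for $x\ge0$, $k(x)=0$ for $x<0$; $\varphi(t)=\exp\big(\int_0^\infty(e^{itx}-1)\frac{k(x)}{x}dx\big)$ is the characteristic function of the stationary distribution of the OU process $dX_t=-\lambda X_tdt+dJ_{\lambda t}$; $\varphi_k(u)=\int_0^\infty e^{iux}k(x)dx$. $W$ is a kernel with Fourier transform $\varphi_W(u)=\int e^{iux}W(x)dx$; $h>0$ a bandwidth; $K_n(x)=\frac1{2\pi}\int_{\mathbb{R}}e^{-itx}\frac{\varphi_W(t)}{\varphi(t/h)}dt$. Conditions: (i) $\int_0^\infty(1\vee|x|^{2+\epsilon})k(x)dx<\infty$ for some $\epsilon>0$. (ii) $k(0)=\alpha$ with $2<\alpha<\infty$. (iv) $|\varphi_k(u)|\lesssim(1+|u|)^{-1}$, $|\varphi_k'(u)|\vee|\varphi_k''(u)|\lesssim(1+|u|)^{-2}$. (v) $W$ integrable, $\int W=1$, $\int|x|^{p+1}|W|<\infty$, $\int x^\ell W(x)dx=0$ for $\ell=1,\dots,p$ (for some integer $p\ge0$), $\varphi_W(u)=0$ for $|u|>1$, $\varphi_W$ three times continuously differentiable.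 Slowly varying factor: under (ii) there exist a function $L:(1,\infty)\to[0,\infty)$ slowly varying at $\infty$ and a constant $B>0$ with $\lim_{|t|\to\infty}|t|^\alpha|\varphi(t)|/L(|t|)=B$; $L$ and $B$ denote such a fixed pair. *)

theory Defs
  imports "HOL-Probability.Probability"
begin

text \<open>Tail function k(x) = nu((x,oo)) of the Levy measure nu = alpha F (k(x) = 0 for x < 0).\<close>
definition kfun :: "real \<Rightarrow> real measure \<Rightarrow> real \<Rightarrow> real" where
  "kfun \<alpha> F x = (if x < 0 then 0 else \<alpha> * measure F {x<..})"

text \<open>Characteristic function of the stationary distribution of the OU process.\<close>
definition phi :: "(real \<Rightarrow> real) \<Rightarrow> real \<Rightarrow> complex" where
  "phi k t = exp (LINT x:{0<..}|lborel.
       (exp (\<i> * complex_of_real (t * x)) - 1) * complex_of_real (k x / x))"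

definition phik :: "(real \<Rightarrow> real) \<Rightarrow> real \<Rightarrow> complex" where
  "phik k u = (LINT x:{0<..}|lborel. exp (\<i> * complex_of_real (u * x)) * complex_of_real (k x))"

definition ftW :: "(real \<Rightarrow> real) \<Rightarrow> real \<Rightarrow> complex" where
  "ftW W u = (LINT x|lborel. exp (\<i> * complex_of_real (u * x)) * complex_of_real (W x))"

definition Kn :: "(real \<Rightarrow> real) \<Rightarrow> (real \<Rightarrow> real) \<Rightarrow> real \<Rightarrow> real \<Rightarrow> complex" where
  "Kn W k h x = complex_of_real (1 / (2 * pi)) *
     (LINT t|lborel. exp (- \<i> * complex_of_real (t * x)) * ftW W t / phi k (t / h))"

definition slowly_varying :: "(real \<Rightarrow> real) \<Rightarrow> bool" where
  "slowly_varying L \<longleftrightarrow> (\<forall>c>0. ((\<lambda>x. L (c * x) / L x) \<longlongrightarrow> 1) at_top)"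

end

theory Submission
  imports Defs
begin

lemma vd_of_quot:
  fixes f :: "real \<Rightarrow> complex"
  assumes "((\<lambda>y. (f y - f t) / complex_of_real (y - t)) \<longlongrightarrow> D) (at t)"
  shows "(f has_vector_derivative D) (at t)"
proof -
  have r: "((\<lambda>y. Re ((f y - f t) / complex_of_real (y - t))) \<longlongrightarrow> Re D) (at t)"
    using tendsto_Re[OF assms] .
  have i: "((\<lambda>y. Im ((f y - f t) / complex_of_real (y - t))) \<longlongrightarrow> Im D) (at t)"
    using tendsto_Im[OF assms] .
  show ?thesis
    unfolding has_vector_derivative_complex_iff has_field_derivative_iff
    using r i by (simp add: Re_divide_of_real Im_divide_of_real)
qed

lemma iexp_diff_bound: "cmod (exp (\<i> * complex_of_real a) - exp (\<i> * complex_of_real b)) \<le> \<bar>a - b\<bar>"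
proof -
  have "exp (\<i> * complex_of_real a) - exp (\<i> * complex_of_real b)
      = exp (\<i> * complex_of_real b) * (exp (\<i> * complex_of_real (a - b)) - 1)"
    by (simp add: algebra_simps exp_diff[symmetric] exp_add[symmetric] )
  hence "cmod (exp (\<i> * complex_of_real a) - exp (\<i> * complex_of_real b))
       = cmod (exp (\<i> * complex_of_real (a - b)) - 1)"
    by (simp add: norm_mult)
  also have "\<dots> = 2 * \<bar>sin ((a - b) / 2)\<bar>" by (rule dist_exp_i_1)
  also have "\<dots> \<le> 2 * \<bar>(a - b) / 2\<bar>" using abs_sin_x_le_abs_x[of "(a - b) / 2"] by simp
  finally show ?thesis by simp
qed

lemma FT_deriv:
  fixes a :: "real \<Rightarrow> complex"
  assumes am: "a \<in> borel_measurable lborel" and ia: "integrable lborel (\<lambda>x. complex_of_real x * a x)"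
  shows "((\<lambda>t. LINT x|lborel. (exp (\<i> * complex_of_real (t * x)) - 1) * a x) has_vector_derivative
           (LINT x|lborel. \<i> * complex_of_real x * exp (\<i> * complex_of_real (t * x)) * a x)) (at t)"
proof (rule vd_of_quot)
  define F where "F t = (LINT x|lborel. (exp (\<i> * complex_of_real (t * x)) - 1) * a x)" for t
  have intF: "integrable lborel (\<lambda>x. (exp (\<i> * complex_of_real (s * x)) - 1) * a x)" for s
  proof (rule Bochner_Integration.integrable_bound[OF integrable_mult_right[OF ia, of "complex_of_real s"]])
    show "(\<lambda>x. (exp (\<i> * complex_of_real (s * x)) - 1) * a x) \<in> borel_measurable lborel"
      using am by measurable
    show "AE x in lborel. norm ((exp (\<i> * complex_of_real (s * x)) - 1) * a x)
          \<le> norm (complex_of_real s * (complex_of_real x * a x))"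
    proof (rule AE_I2)
      fix x
      have "cmod (exp (\<i> * complex_of_real (s * x)) - exp (\<i> * complex_of_real 0)) \<le> \<bar>s * x - 0\<bar>"
        by (rule iexp_diff_bound)
      hence b: "cmod (exp (\<i> * complex_of_real (s * x)) - 1) \<le> \<bar>s\<bar> * \<bar>x\<bar>" by (simp add: abs_mult)
      show "norm ((exp (\<i> * complex_of_real (s * x)) - 1) * a x)
          \<le> norm (complex_of_real s * (complex_of_real x * a x))"
        using mult_right_mono[OF b norm_ge_zero[of "a x"]] by (simp add: norm_mult mult.assoc)
    qed
  qed
  let ?D = "LINT x|lborel. \<i> * complex_of_real x * exp (\<i> * complex_of_real (t * x)) * a x"
  show "((\<lambda>y. (F y - F t) / complex_of_real (y - t)) \<longlongrightarrow> ?D) (at t)"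
    unfolding tendsto_at_iff_sequentially
  proof (intro allI impI)
    fix X :: "nat \<Rightarrow> real" assume X: "\<forall>i. X i \<in> UNIV - {t}" and Xt: "X \<longlonglongrightarrow> t"
    define s where "s i x = (exp (\<i> * complex_of_real (X i * x)) - exp (\<i> * complex_of_real (t * x)))
        / complex_of_real (X i - t) * a x" for i x
    have eq: "(F (X i) - F t) / complex_of_real (X i - t) = (LINT x|lborel. s i x)" for i
    proof -
      have "F (X i) - F t = (LINT x|lborel. (exp (\<i> * complex_of_real (X i * x)) - 1) * a x
             - (exp (\<i> * complex_of_real (t * x)) - 1) * a x)"
        unfolding F_def by (rule Bochner_Integration.integral_diff[symmetric, OF intF intF])
      also have "\<dots> = (LINT x|lborel. (exp (\<i> * complex_of_real (X i * x)) - exp (\<i> * complex_of_real (t * x))) * a x)"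
        by (rule Bochner_Integration.integral_cong) (auto simp: algebra_simps)
      finally have "(F (X i) - F t) / complex_of_real (X i - t) = (LINT x|lborel. (exp (\<i> * complex_of_real (X i * x)) - exp (\<i> * complex_of_real (t * x))) * a x) / complex_of_real (X i - t)"
        by simp
      also have "\<dots> = (LINT x|lborel. (exp (\<i> * complex_of_real (X i * x)) - exp (\<i> * complex_of_real (t * x))) * a x / complex_of_real (X i - t))"
        by (rule integral_divide_zero[symmetric])
      also have "\<dots> = (LINT x|lborel. s i x)"
        unfolding s_def by (rule Bochner_Integration.integral_cong) (simp_all add: divide_inverse ac_simps)
      finally show ?thesis .
    qed
    have lim: "(\<lambda>i. LINT x|lborel. s i x) \<longlonglongrightarrow> ?D"
    proof (rule integral_dominated_convergence[where w = "\<lambda>x. norm (complex_of_real x * a x)"])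
      show "(\<lambda>x. \<i> * complex_of_real x * exp (\<i> * complex_of_real (t * x)) * a x) \<in> borel_measurable lborel"
        using am by measurable
      show "s i \<in> borel_measurable lborel" for i unfolding s_def using am by measurable
      show "integrable lborel (\<lambda>x. norm (complex_of_real x * a x))" using ia by auto
      show "AE x in lborel. norm (s i x) \<le> norm (complex_of_real x * a x)" for i
      proof (rule AE_I2)
        fix x
        have ne: "X i - t \<noteq> 0" using X by auto
        have "cmod (exp (\<i> * complex_of_real (X i * x)) - exp (\<i> * complex_of_real (t * x))) \<le> \<bar>X i * x - t * x\<bar>"
          by (rule iexp_diff_bound)
        also have "\<dots> = \<bar>X i - t\<bar> * \<bar>x\<bar>" by (simp add: abs_mult[symmetric] algebra_simps)
        finally have b: "cmod (exp (\<i> * complex_of_real (X i * x)) - exp (\<i> * complex_of_real (t * x))) / \<bar>X i - t\<bar> \<le> \<bar>x\<bar>"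
          using ne by (simp add: divide_le_eq mult.commute)
        have "norm (s i x) = cmod (exp (\<i> * complex_of_real (X i * x)) - exp (\<i> * complex_of_real (t * x))) / \<bar>X i - t\<bar> * cmod (a x)"
          unfolding s_def norm_mult norm_divide by (simp del: of_real_diff add: of_real_diff[symmetric])
        also have "\<dots> \<le> \<bar>x\<bar> * cmod (a x)" by (rule mult_right_mono[OF b norm_ge_zero])
        finally show "norm (s i x) \<le> norm (complex_of_real x * a x)" by (simp add: norm_mult)
      qed
      show "AE x in lborel. (\<lambda>i. s i x) \<longlonglongrightarrow> \<i> * complex_of_real x * exp (\<i> * complex_of_real (t * x)) * a x"
      proof (rule AE_I2)
        fix x
        have d: "((\<lambda>z. exp (\<i> * z * complex_of_real x)) has_field_derivative
                 \<i> * complex_of_real x * exp (\<i> * complex_of_real t * complex_of_real x)) (at (complex_of_real t))"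
          by (auto intro!: derivative_eq_intros simp: algebra_simps)
        have q: "((\<lambda>z. (exp (\<i> * z * complex_of_real x) - exp (\<i> * complex_of_real t * complex_of_real x)) / (z - complex_of_real t))
              \<longlongrightarrow> \<i> * complex_of_real x * exp (\<i> * complex_of_real t * complex_of_real x)) (at (complex_of_real t))"
          using d unfolding has_field_derivative_iff by simp
        have Xc: "(\<lambda>i. complex_of_real (X i)) \<longlonglongrightarrow> complex_of_real t"
          using Xt by (rule tendsto_of_real)
        have "\<And>i. complex_of_real (X i) \<in> UNIV - {complex_of_real t}" using X by auto
        from q[unfolded tendsto_at_iff_sequentially, rule_format, OF this Xc]
        have "(\<lambda>i. (exp (\<i> * complex_of_real (X i) * complex_of_real x) - exp (\<i> * complex_of_real t * complex_of_real x)) / (complex_of_real (X i) - complex_of_real t))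
              \<longlonglongrightarrow> \<i> * complex_of_real x * exp (\<i> * complex_of_real t * complex_of_real x)"
          by (simp add: o_def)
        from tendsto_mult_right[OF this, of "a x"]
        show "(\<lambda>i. s i x) \<longlonglongrightarrow> \<i> * complex_of_real x * exp (\<i> * complex_of_real (t * x)) * a x"
          unfolding s_def by (simp add: mult.assoc)
      qed
    qed
    show "((\<lambda>y. (F y - F t) / complex_of_real (y - t)) \<circ> X) \<longlonglongrightarrow> ?D"
    proof -
      have "(\<lambda>i. (F (X i) - F t) / complex_of_real (X i - t)) = (\<lambda>i. LINT x|lborel. s i x)"
        using eq by (rule ext)
      thus ?thesis using lim by (simp only: o_def)
    qed
  qed
qed

abbreviation "Sp \<equiv> {0<..} :: real set"

lemma set_FT_deriv1:
  fixes b :: "real \<Rightarrow> complex"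
  assumes bm: "b \<in> borel_measurable borel" and ib: "set_integrable lborel Sp (\<lambda>x. complex_of_real x * b x)"
  shows "((\<lambda>t. LINT x:Sp|lborel. (exp (\<i> * complex_of_real (t * x)) - 1) * b x) has_vector_derivative
           (LINT x:Sp|lborel. \<i> * complex_of_real x * exp (\<i> * complex_of_real (t * x)) * b x)) (at t)"
proof -
  define a where "a x = indicator Sp x *\<^sub>R b x" for x
  have am: "a \<in> borel_measurable lborel" unfolding a_def using bm by measurable
  have ia: "integrable lborel (\<lambda>x. complex_of_real x * a x)"
    using ib unfolding set_integrable_def a_def
    by (rule Bochner_Integration.integrable_cong[THEN iffD1, rotated 2]) (auto simp: indicator_def)
  have e1: "(LINT x:Sp|lborel. (exp (\<i> * complex_of_real (t * x)) - 1) * b x)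
      = (LINT x|lborel. (exp (\<i> * complex_of_real (t * x)) - 1) * a x)" for t
    unfolding set_lebesgue_integral_def a_def
    by (rule Bochner_Integration.integral_cong) (auto simp: indicator_def)
  have e2: "(LINT x:Sp|lborel. \<i> * complex_of_real x * exp (\<i> * complex_of_real (t * x)) * b x)
      = (LINT x|lborel. \<i> * complex_of_real x * exp (\<i> * complex_of_real (t * x)) * a x)"
    unfolding set_lebesgue_integral_def a_def
    by (rule Bochner_Integration.integral_cong) (auto simp: indicator_def)
  show ?thesis unfolding e1 e2 by (rule FT_deriv[OF am ia])
qed

lemma set_FT_deriv2:
  fixes b :: "real \<Rightarrow> complex"
  assumes bm: "b \<in> borel_measurable borel" and ib0: "set_integrable lborel Sp b"
    and ib: "set_integrable lborel Sp (\<lambda>x. complex_of_real x * b x)"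
  shows "((\<lambda>t. LINT x:Sp|lborel. exp (\<i> * complex_of_real (t * x)) * b x) has_vector_derivative
           (LINT x:Sp|lborel. \<i> * complex_of_real x * exp (\<i> * complex_of_real (t * x)) * b x)) (at t)"
proof -
  have i1: "set_integrable lborel Sp (\<lambda>x. (exp (\<i> * complex_of_real (s * x)) - 1) * b x)" for s
    unfolding set_integrable_def
  proof (rule Bochner_Integration.integrable_bound[OF integrable_mult_right[OF ib0[unfolded set_integrable_def], of 2]])
    show "(\<lambda>x. indicator Sp x *\<^sub>R ((exp (\<i> * complex_of_real (s * x)) - 1) * b x)) \<in> borel_measurable lborel"
      using bm by measurable
    show "AE x in lborel. norm (indicator Sp x *\<^sub>R ((exp (\<i> * complex_of_real (s * x)) - 1) * b x))
        \<le> norm (2 * (indicator Sp x *\<^sub>R b x))"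
    proof (rule AE_I2)
      fix x
      have "cmod (exp (\<i> * complex_of_real (s * x)) - 1) \<le> cmod (exp (\<i> * complex_of_real (s * x))) + cmod 1"
        by (rule norm_triangle_ineq4)
      hence b: "cmod (exp (\<i> * complex_of_real (s * x)) - 1) \<le> 2" by simp
      show "norm (indicator Sp x *\<^sub>R ((exp (\<i> * complex_of_real (s * x)) - 1) * b x))
        \<le> norm (2 * (indicator Sp x *\<^sub>R b x))"
        using mult_right_mono[OF b norm_ge_zero[of "b x"]] by (auto simp: indicator_def norm_mult)
    qed
  qed
  have eq: "(LINT x:Sp|lborel. exp (\<i> * complex_of_real (t * x)) * b x)
     = (LINT x:Sp|lborel. (exp (\<i> * complex_of_real (t * x)) - 1) * b x) + (LINT x:Sp|lborel. b x)" for t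
  proof -
    have "(LINT x:Sp|lborel. (exp (\<i> * complex_of_real (t * x)) - 1) * b x) + (LINT x:Sp|lborel. b x)
        = (LINT x:Sp|lborel. (exp (\<i> * complex_of_real (t * x)) - 1) * b x + b x)"
      by (rule set_integral_add(2)[symmetric, OF i1 ib0])
    also have "\<dots> = (LINT x:Sp|lborel. exp (\<i> * complex_of_real (t * x)) * b x)"
      by (simp add: algebra_simps)
    finally show ?thesis by simp
  qed
  show ?thesis unfolding eq
    by (rule has_vector_derivative_add_const[THEN iffD2, OF set_FT_deriv1[OF bm ib]])
qed

definition psi :: "(real \<Rightarrow> real) \<Rightarrow> real \<Rightarrow> complex" where
  "psi k t = (LINT x:Sp|lborel. (exp (\<i> * complex_of_real (t * x)) - 1) * complex_of_real (k x / x))"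

definition p1 :: "(real \<Rightarrow> real) \<Rightarrow> real \<Rightarrow> complex" where
  "p1 k u = (LINT x:Sp|lborel. \<i> * complex_of_real x * exp (\<i> * complex_of_real (u * x)) * complex_of_real (k x))"

definition p2 :: "(real \<Rightarrow> real) \<Rightarrow> real \<Rightarrow> complex" where
  "p2 k u = (LINT x:Sp|lborel. \<i> * complex_of_real x * exp (\<i> * complex_of_real (u * x)) *
       (\<i> * complex_of_real x * complex_of_real (k x)))"

lemma phi_psi: "phi k t = exp (psi k t)"
  unfolding phi_def psi_def by simp

lemma pow_le_max:
  fixes x e :: real
  assumes "x > 0" "e > 0" "j \<le> 2"
  shows "x ^ j \<le> max 1 (\<bar>x\<bar> powr (2 + e))"
proof (cases "x \<le> 1")
  case True
  hence "x ^ j \<le> 1" using assms by (simp add: power_le_one)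
  thus ?thesis by simp
next
  case False
  hence "x ^ j \<le> x ^ 2" using assms by (intro power_increasing) auto
  also have "x ^ 2 = x powr 2" using assms by (simp add: powr_realpow)
  also have "\<dots> \<le> x powr (2 + e)" using False assms by (intro powr_mono) auto
  finally show ?thesis using assms by simp
qed

locale L5 =
  fixes \<alpha> \<epsilon> :: real and F :: "real measure"
  assumes F_prob: "prob_space F" and F_sets: "sets F = sets borel"
    and eps: "\<epsilon> > 0"
    and ci: "set_integrable lborel {0<..} (\<lambda>x. max 1 (\<bar>x\<bar> powr (2 + \<epsilon>)) * kfun \<alpha> F x)"
    and apos: "2 < \<alpha>"
begin

abbreviation "k \<equiv> kfun \<alpha> F"

lemma k_nonneg: "k x \<ge> 0"
  using apos by (simp add: kfun_def)

lemma k_meas: "k \<in> borel_measurable borel"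
proof -
  interpret prob_space F by (rule F_prob)
  have "mono (\<lambda>x. - measure F {x<..})"
  proof (rule monoI)
    fix x y :: real assume "x \<le> y"
    hence "measure F {y<..} \<le> measure F {x<..}"
      using F_sets by (intro finite_measure_mono) auto
    thus "- measure F {x<..} \<le> - measure F {y<..}" by simp
  qed
  hence m: "(\<lambda>x. - measure F {x<..}) \<in> borel_measurable borel" by (rule borel_measurable_mono)
  have "(\<lambda>x. - (- measure F {x<..})) \<in> borel_measurable borel" using m by measurable
  hence m2: "(\<lambda>x. measure F {x<..}) \<in> borel_measurable borel" by simp
  show ?thesis unfolding kfun_def using m2 by measurable
qed

lemma k_int_pow:
  assumes "j \<le> 2"
  shows "set_integrable lborel Sp (\<lambda>x. x ^ j * k x)"
proof (rule set_integrable_bound[OF ci])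
  show "set_borel_measurable lborel Sp (\<lambda>x. x ^ j * k x)"
    unfolding set_borel_measurable_def using k_meas by measurable
  show "AE x in lborel. x \<in> Sp \<longrightarrow> norm (x ^ j * k x) \<le> norm (max 1 (\<bar>x\<bar> powr (2 + \<epsilon>)) * k x)"
  proof (rule AE_I2, rule impI)
    fix x :: real assume x: "x \<in> Sp"
    have "x ^ j * k x \<le> max 1 (\<bar>x\<bar> powr (2 + \<epsilon>)) * k x"
      using pow_le_max[of x \<epsilon> j] x eps assms k_nonneg[of x] by (intro mult_right_mono) auto
    thus "norm (x ^ j * k x) \<le> norm (max 1 (\<bar>x\<bar> powr (2 + \<epsilon>)) * k x)"
      using x k_nonneg[of x] by simp
  qed
qed

lemma cset_int: "set_integrable lborel A f \<Longrightarrow> set_integrable lborel A (\<lambda>x. complex_of_real (f x))"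
  unfolding set_integrable_def
  by (rule Bochner_Integration.integrable_cong[THEN iffD1, OF refl _ integrable_of_real]) (auto simp: indicator_def)

lemma psi_deriv: "(psi k has_vector_derivative \<i> * phik k t) (at t)"
proof -
  have bm: "(\<lambda>x. complex_of_real (k x / x)) \<in> borel_measurable borel" using k_meas by measurable
  have ib: "set_integrable lborel Sp (\<lambda>x. complex_of_real x * complex_of_real (k x / x))"
  proof -
    have "set_integrable lborel Sp (\<lambda>x. complex_of_real (x ^ 0 * k x))" by (rule cset_int[OF k_int_pow]) simp
    moreover have "set_integrable lborel Sp (\<lambda>x. complex_of_real (x ^ 0 * k x))
       = set_integrable lborel Sp (\<lambda>x. complex_of_real x * complex_of_real (k x / x))"
      by (rule set_integrable_cong) auto
    ultimately show ?thesis by simp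
  qed
  have eq: "(LINT x:Sp|lborel. \<i> * complex_of_real x * exp (\<i> * complex_of_real (t * x)) * complex_of_real (k x / x))
      = \<i> * phik k t"
  proof -
    have "(LINT x:Sp|lborel. \<i> * complex_of_real x * exp (\<i> * complex_of_real (t * x)) * complex_of_real (k x / x))
        = (LINT x:Sp|lborel. \<i> * (exp (\<i> * complex_of_real (t * x)) * complex_of_real (k x)))"
      by (rule set_lebesgue_integral_cong) auto
    thus ?thesis unfolding phik_def by simp
  qed
  show ?thesis using set_FT_deriv1[OF bm ib, of t] unfolding eq psi_def[abs_def] .
qed

lemma phik_deriv: "(phik k has_vector_derivative p1 k u) (at u)"
proof -
  have bm: "(\<lambda>x. complex_of_real (k x)) \<in> borel_measurable borel" using k_meas by measurable
  have ib0: "set_integrable lborel Sp (\<lambda>x. complex_of_real (k x))"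
    using cset_int[OF k_int_pow[of 0]] by simp
  have ib: "set_integrable lborel Sp (\<lambda>x. complex_of_real x * complex_of_real (k x))"
    using cset_int[OF k_int_pow[of 1]] by simp
  show ?thesis using set_FT_deriv2[OF bm ib0 ib, of u] unfolding phik_def[abs_def] p1_def .
qed

lemma p1_deriv: "(p1 k has_vector_derivative p2 k u) (at u)"
proof -
  have bm: "(\<lambda>x. \<i> * complex_of_real x * complex_of_real (k x)) \<in> borel_measurable borel" using k_meas by measurable
  have ib0: "set_integrable lborel Sp (\<lambda>x. \<i> * complex_of_real x * complex_of_real (k x))"
    using set_integrable_mult_right[OF cset_int[OF k_int_pow[of 1]], of \<i>] by (simp add: mult.assoc)
  have ib: "set_integrable lborel Sp (\<lambda>x. complex_of_real x * (\<i> * complex_of_real x * complex_of_real (k x)))"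
    using set_integrable_mult_right[OF cset_int[OF k_int_pow[of 2]], of \<i>] by (simp add: power2_eq_square ac_simps)
  have eq: "p1 k = (\<lambda>u. LINT x:Sp|lborel. exp (\<i> * complex_of_real (u * x)) * (\<i> * complex_of_real x * complex_of_real (k x)))"
    unfolding p1_def by (intro ext set_lebesgue_integral_cong) (auto simp: ac_simps)
  show ?thesis using set_FT_deriv2[OF bm ib0 ib, of u] unfolding eq p2_def .
qed

lemma vd1: "vector_derivative (phik k) (at u) = p1 k u"
  by (rule vector_derivative_at[OF phik_deriv])

lemma vd2: "vector_derivative (\<lambda>v. vector_derivative (phik k) (at v)) (at u) = p2 k u"
  unfolding vd1 by (rule vector_derivative_at[OF p1_deriv])

end

lemma lip_from_deriv:
  fixes f f' :: "real \<Rightarrow> real"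
  assumes d: "\<And>x. (f has_real_derivative f' x) (at x)" and b: "\<And>x. \<bar>f' x\<bar> \<le> K"
  shows "\<bar>f y - f x\<bar> \<le> K * \<bar>y - x\<bar>"
proof -
  have main: "\<bar>f b' - f a'\<bar> \<le> K * (b' - a')" if "a' < b'" for a' b'
  proof -
    have "\<exists>z. a' < z \<and> z < b' \<and> f b' - f a' = (b' - a') * f' z" by (rule MVT2[OF that]) (rule d)
    then obtain z where "f b' - f a' = (b' - a') * f' z" by blast
    hence "\<bar>f b' - f a'\<bar> = (b' - a') * \<bar>f' z\<bar>" using that by (simp add: abs_mult)
    also have "\<dots> \<le> (b' - a') * K" using that b[of z] by (intro mult_left_mono) auto
    finally show ?thesis by (simp add: mult.commute)
  qed
  show ?thesis
  proof (cases x y rule: linorder_cases)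
    case less thus ?thesis using main[OF less] by simp
  next
    case equal thus ?thesis by simp
  next
    case greater thus ?thesis using main[OF greater] by (simp add: abs_minus_commute)
  qed
qed

lemma psi_0: "psi k 0 = 0"
  unfolding psi_def by simp

lemma psi_neg: "psi k (- v) = cnj (psi k v)"
proof -
  have e: "exp (\<i> * complex_of_real (- v * x)) = cnj (exp (\<i> * complex_of_real (v * x)))" for x
    by (simp add: exp_cnj)
  have 1: "psi k (- v) = (LINT x|lborel. cnj (indicator Sp x *\<^sub>R ((exp (\<i> * complex_of_real (v * x)) - 1) * complex_of_real (k x / x))))"
    unfolding psi_def set_lebesgue_integral_def
    by (rule Bochner_Integration.integral_cong) (simp_all only: e, simp)
  also have "\<dots> = cnj (psi k v)" unfolding psi_def set_lebesgue_integral_def by (rule Bochner_Integration.integral_cnj)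
  finally show ?thesis .
qed

lemma norm_phi: "cmod (phi k v) = exp (Re (psi k v))"
  unfolding phi_psi by (rule norm_exp_eq_Re)

lemma Re_psi_even: "Re (psi k (- v)) = Re (psi k v)"
  unfolding psi_neg by simp

context L5 begin

lemma Re_psi_deriv: "((\<lambda>x. Re (psi k x)) has_real_derivative Re (\<i> * phik k t)) (at t)"
  using psi_deriv[of t] unfolding has_vector_derivative_complex_iff by simp

end

locale L5c = L5 +
  fixes c :: real
  assumes cb0: "\<And>u. cmod (phik (kfun \<alpha> F) u) \<le> c / (1 + \<bar>u\<bar>)"
    and cb1: "\<And>u. cmod (p1 (kfun \<alpha> F) u) \<le> c / (1 + \<bar>u\<bar>)\<^sup>2"
    and cb2: "\<And>u. cmod (p2 (kfun \<alpha> F) u) \<le> c / (1 + \<bar>u\<bar>)\<^sup>2"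
begin

lemma c_nonneg: "c \<ge> 0"
proof -
  have "cmod (phik k 0) \<le> c" using cb0[of 0] by simp
  thus ?thesis using norm_ge_zero order_trans by blast
qed

lemma Re_psi_lip: "\<bar>Re (psi k y) - Re (psi k x)\<bar> \<le> c * \<bar>y - x\<bar>"
proof (rule lip_from_deriv[OF Re_psi_deriv])
  fix t
  have "\<bar>Re (\<i> * phik k t)\<bar> \<le> cmod (\<i> * phik k t)" by (rule abs_Re_le_cmod)
  also have "\<dots> = cmod (phik k t)" by (simp add: norm_mult)
  also have "\<dots> \<le> c / (1 + \<bar>t\<bar>)" by (rule cb0)
  also have "\<dots> \<le> c / 1" using c_nonneg by (intro divide_left_mono) auto
  also have "\<dots> = c" by simp
  finally show "\<bar>Re (\<i> * phik k t)\<bar> \<le> c" .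
qed

lemma Re_psi_abs: "\<bar>Re (psi k v)\<bar> \<le> c * \<bar>v\<bar>"
  using Re_psi_lip[of v 0] by (simp add: psi_0)

lemma Re_psi_loglip:
  assumes "0 < x" "0 < y"
  shows "\<bar>Re (psi k y) - Re (psi k x)\<bar> \<le> c * \<bar>ln y - ln x\<bar>"
proof -
  have d: "((\<lambda>s. Re (psi k (exp s))) has_real_derivative Re (\<i> * phik k (exp s)) * exp s) (at s)" for s
    by (rule DERIV_chain2[OF Re_psi_deriv DERIV_exp])
  have b: "\<bar>Re (\<i> * phik k (exp s)) * exp s\<bar> \<le> c" for s
  proof -
    have "\<bar>Re (\<i> * phik k (exp s))\<bar> \<le> c / (1 + exp s)"
      using abs_Re_le_cmod[of "\<i> * phik k (exp s)"] cb0[of "exp s"] by (simp add: norm_mult)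
    hence "\<bar>Re (\<i> * phik k (exp s))\<bar> * exp s \<le> c / (1 + exp s) * exp s"
      by (intro mult_right_mono) auto
    also have "\<dots> = c * (exp s / (1 + exp s))" by simp
    also have "\<dots> \<le> c * 1" using c_nonneg add_pos_pos[OF zero_less_one exp_gt_zero[of s]] by (intro mult_left_mono) (auto simp: divide_le_eq)
    also have "\<dots> = c" by simp
    finally show ?thesis by (simp add: abs_mult)
  qed
  from lip_from_deriv[OF d b, of "ln y" "ln x"] show ?thesis using assms by simp
qed

end

locale L5P = L5c +
  fixes L :: "real \<Rightarrow> real" and B :: real
  assumes L_nonneg: "\<And>t. t > 1 \<Longrightarrow> L t \<ge> 0"
    and L_sv: "slowly_varying L"
    and B_pos: "B > 0"
    and L_B: "((\<lambda>t. \<bar>t\<bar> powr \<alpha> * cmod (phi (kfun \<alpha> F) t) / L \<bar>t\<bar>) \<longlongrightarrow> B) at_infinity"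
begin

lemma fe: "filterlim (\<lambda>v::real. exp 1 * v) at_top at_top"
  by (rule filterlim_tendsto_pos_mult_at_top[OF tendsto_const exp_gt_zero filterlim_ident])

definition ell :: "real \<Rightarrow> real" where "ell v = \<alpha> * ln v + Re (psi k v)"

definition Lam :: real where "Lam = \<alpha> + c"

lemma ell_lip:
  assumes "0 < u" "0 < v"
  shows "\<bar>ell v - ell u\<bar> \<le> Lam * \<bar>ln v - ln u\<bar>"
proof -
  have "\<bar>ell v - ell u\<bar> \<le> \<bar>\<alpha> * (ln v - ln u)\<bar> + \<bar>Re (psi k v) - Re (psi k u)\<bar>"
    unfolding ell_def by (simp add: algebra_simps)
  also have "\<dots> \<le> \<alpha> * \<bar>ln v - ln u\<bar> + c * \<bar>ln v - ln u\<bar>"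
    using Re_psi_loglip[OF assms] apos by (simp add: abs_mult)
  finally show ?thesis unfolding Lam_def by (simp add: algebra_simps)
qed

definition Q :: "real \<Rightarrow> real" where "Q v = \<bar>v\<bar> powr \<alpha> * cmod (phi k v) / L \<bar>v\<bar>"

lemma Q_lim: "(Q \<longlongrightarrow> B) at_top"
  using tendsto_mono[OF at_top_le_at_infinity L_B] unfolding Q_def[abs_def] .

lemma Q_lim_e: "((\<lambda>v. Q (exp 1 * v)) \<longlongrightarrow> B) at_top"
proof -
  from filterlim_compose[OF Q_lim fe] show ?thesis by (simp add: o_def)
qed

lemma Q_pos_ev: "\<forall>\<^sub>F v in at_top. Q v > B / 2"
proof -
  have "B / 2 < B" using B_pos by simp
  from order_tendstoD(1)[OF Q_lim this] show ?thesis .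
qed

lemma L_pos_ev: "\<forall>\<^sub>F v in at_top. L v > 0 \<and> L v \<le> (2 / B) * (v powr \<alpha> * cmod (phi k v))"
proof -
  have "\<forall>\<^sub>F v in at_top. Q v > B / 2 \<and> v > 1" by (rule eventually_conj[OF Q_pos_ev eventually_gt_at_top])
  thus ?thesis
  proof (rule eventually_mono)
    fix v assume v: "Q v > B / 2 \<and> v > 1"
    hence L0: "L v \<ge> 0" using L_nonneg by auto
    have Lne: "L v \<noteq> 0"
    proof
      assume "L v = 0" hence "Q v = 0" unfolding Q_def using v by simp
      thus False using v B_pos by simp
    qed
    hence Lp: "L v > 0" using L0 by simp
    have av: "\<bar>v\<bar> = v" using v by simp
    have "B / 2 < v powr \<alpha> * cmod (phi k v) / L v" using v unfolding Q_def av by simp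
    hence "B / 2 * L v < v powr \<alpha> * cmod (phi k v)" using Lp by (simp add: less_divide_eq)
    hence "L v \<le> (2 / B) * (v powr \<alpha> * cmod (phi k v))" using B_pos
      by (simp add: field_simps)
    thus "L v > 0 \<and> L v \<le> (2 / B) * (v powr \<alpha> * cmod (phi k v))" using Lp by simp
  qed
qed

lemma ell_step: "((\<lambda>v. ell (exp 1 * v) - ell v) \<longlongrightarrow> 0) at_top"
proof -
  have sv: "((\<lambda>x. L (exp 1 * x) / L x) \<longlongrightarrow> 1) at_top" using L_sv unfolding slowly_varying_def by simp
  have R: "((\<lambda>v. Q (exp 1 * v) / Q v * (L (exp 1 * v) / L v)) \<longlongrightarrow> B / B * 1) at_top"
    by (intro tendsto_intros Q_lim_e Q_lim sv) (use B_pos in simp)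
  have lnR: "((\<lambda>v. ln (Q (exp 1 * v) / Q v * (L (exp 1 * v) / L v))) \<longlongrightarrow> ln (B / B * 1)) at_top"
    by (rule tendsto_ln[OF R]) (use B_pos in simp)
  have ev: "\<forall>\<^sub>F v in at_top. ln (Q (exp 1 * v) / Q v * (L (exp 1 * v) / L v)) = ell (exp 1 * v) - ell v"
  proof -
    note f = fe
    have "\<forall>\<^sub>F v in at_top. L (exp 1 * v) > 0"
      using filterlim_iff[THEN iffD1, OF f, rule_format, OF L_pos_ev] by (auto elim: eventually_mono)
    moreover have "\<forall>\<^sub>F v in at_top. L v > 0" using L_pos_ev by (auto elim: eventually_mono)
    moreover have "\<forall>\<^sub>F v in at_top. (v::real) > 0" using eventually_gt_at_top[of "0::real"] by simp
    ultimately show ?thesis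
    proof eventually_elim
      case (elim v)
      have ev: "exp 1 * v > 0" using elim by simp
      have "Q (exp 1 * v) / Q v * (L (exp 1 * v) / L v)
          = ((exp 1 * v) powr \<alpha> * cmod (phi k (exp 1 * v))) / (v powr \<alpha> * cmod (phi k v))"
        unfolding Q_def using elim ev by (simp add: field_simps)
      also have "\<dots> = exp (ell (exp 1 * v)) / exp (ell v)"
        unfolding ell_def norm_phi using elim ev
        by (simp add: powr_def exp_add mult.commute)
      also have "\<dots> = exp (ell (exp 1 * v) - ell v)" by (simp add: exp_diff)
      finally show ?case by simp
    qed
  qed
  have z: "ln (B / B * 1) = 0" using B_pos by simp
  from lnR[unfolded z] show ?thesis by (rule tendsto_cong[OF ev, THEN iffD1])
qed

lemma potter:
  assumes d: "\<delta> > 0"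
  shows "\<exists>V0\<ge>1. \<forall>u w. V0 \<le> u \<longrightarrow> u \<le> w \<longrightarrow> ell w - ell u \<le> \<delta> * (ln w - ln u) + Lam"
proof -
  have "\<forall>\<^sub>F v in at_top. ell (exp 1 * v) - ell v < \<delta>" using order_tendstoD(2)[OF ell_step d] .
  then obtain V where V: "\<And>v. v \<ge> V \<Longrightarrow> ell (exp 1 * v) - ell v < \<delta>"
    unfolding eventually_at_top_linorder by blast
  define V0 where "V0 = max V 1"
  have V0: "V0 \<ge> 1" "V0 \<ge> V" unfolding V0_def by auto
  have chain: "\<And>u. V0 \<le> u \<Longrightarrow> ell (exp (real n) * u) - ell u \<le> real n * \<delta>" for n :: nat
  proof (induction n)
    case 0 thus ?case by simp
  next
    case (Suc n)
    have "exp (real n) * u \<ge> u" using Suc.prems V0 by simp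
    hence "exp (real n) * u \<ge> V" using Suc.prems V0 by linarith
    hence "ell (exp 1 * (exp (real n) * u)) - ell (exp (real n) * u) < \<delta>" by (rule V)
    moreover have e2: "exp (real (Suc n)) * u = exp 1 * (exp (real n) * u)"
      by (simp add: exp_add[symmetric] add.commute)
    moreover have "ell (exp (real (Suc n)) * u) = ell (exp 1 * (exp (real n) * u))" by (simp only: e2)
    ultimately show ?case using Suc.IH[OF Suc.prems] by (simp add: algebra_simps)
  qed
  have "\<forall>u w. V0 \<le> u \<longrightarrow> u \<le> w \<longrightarrow> ell w - ell u \<le> \<delta> * (ln w - ln u) + Lam"
  proof (intro allI impI)
    fix u w assume u: "V0 \<le> u" and w: "u \<le> w"
    have up: "u > 0" using u V0 by simp
    have wp: "w > 0" using up w by simp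
    define D where "D = ln w - ln u"
    have D0: "D \<ge> 0" unfolding D_def using up w by simp
    define n where "n = nat \<lfloor>D\<rfloor>"
    have n1: "real n \<le> D" unfolding n_def using D0 by linarith
    have n2: "D < real n + 1" unfolding n_def using D0 by linarith
    have pos: "exp (real n) * u > 0" using up by simp
    have le: "ln (exp (real n) * u) = real n + ln u" using up by (simp add: ln_mult)
    have "ell w - ell (exp (real n) * u) \<le> Lam * \<bar>ln w - ln (exp (real n) * u)\<bar>"
      using ell_lip[OF pos wp] by linarith
    also have "\<bar>ln w - ln (exp (real n) * u)\<bar> = D - real n" unfolding le D_def using n1 D_def by simp
    also have "Lam * (D - real n) \<le> Lam * 1"
      using n2 apos c_nonneg unfolding Lam_def by (intro mult_left_mono) auto
    finally have a: "ell w - ell (exp (real n) * u) \<le> Lam" by simp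
    have b: "ell (exp (real n) * u) - ell u \<le> real n * \<delta>" by (rule chain[OF u])
    have "real n * \<delta> \<le> D * \<delta>" using n1 d by (intro mult_right_mono) auto
    thus "ell w - ell u \<le> \<delta> * (ln w - ln u) + Lam" using a b unfolding D_def by (simp add: algebra_simps)
  qed
  thus ?thesis using V0 by blast
qed

end

context L5P begin

lemma key:
  "\<exists>K R. R \<ge> 1 \<and> (\<forall>r \<ge> R. \<forall>t. \<bar>t\<bar> \<le> 1 \<longrightarrow>
     exp (Re (psi k r) - Re (psi k (r * t))) * (r / (1 + r * \<bar>t\<bar>))\<^sup>2 \<le> K)"
proof -
  define \<delta> where "\<delta> = (\<alpha> - 2) / 2"
  have dpos: "\<delta> > 0" unfolding \<delta>_def using apos by simp
  have d2: "\<alpha> - 2 = 2 * \<delta>" unfolding \<delta>_def by simp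
  obtain V0 where V0: "V0 \<ge> 1" and P: "\<And>u w. V0 \<le> u \<Longrightarrow> u \<le> w \<Longrightarrow> ell w - ell u \<le> \<delta> * (ln w - ln u) + Lam"
    using potter[OF dpos] by blast
  define K1 where "K1 = exp Lam"
  define K2 where "K2 = exp (ell V0 + Lam + c * V0 - \<delta> * ln V0)"
  have main: "exp (Re (psi k r) - Re (psi k (r * s))) * (r / (1 + r * s))\<^sup>2 \<le> max K1 K2"
    if r: "r \<ge> V0" and s0: "0 \<le> s" and s1: "s \<le> 1" for r s
  proof -
    have rp: "r > 0" using r V0 by simp
    define X where "X = Re (psi k r) - Re (psi k (r * s))"
    have rho0: "0 < r / (1 + r * s)" using rp s0 by (simp add: add_pos_nonneg)
    show ?thesis
    proof (cases "r * s \<ge> V0")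
      case True
      have sp: "s > 0" using True V0 rp s0 by (cases "s = 0") auto
      have rsp: "r * s > 0" using sp rp by simp
      have rsr: "r * s \<le> r" using s1 rp by (simp add: mult_le_cancel_left1)
      have lrs: "ln (r * s) = ln r + ln s" using rp sp by (simp add: ln_mult)
      have "ell r - ell (r * s) \<le> \<delta> * (ln r - ln (r * s)) + Lam" by (rule P[OF True rsr])
      hence Xb: "X \<le> (\<alpha> - \<delta>) * ln s + Lam"
        unfolding X_def ell_def lrs by (simp add: algebra_simps)
      have lns: "ln s \<le> 0" using sp s1 by simp
      have "r * s / (1 + r * s) \<le> 1" using rsp by (simp add: divide_le_eq_1)
      hence "r / (1 + r * s) \<le> 1 / s" using rp sp by (simp add: field_simps)
      hence "(r / (1 + r * s))\<^sup>2 \<le> (1 / s)\<^sup>2" using rho0 by (intro power_mono) auto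
      also have "(1 / s)\<^sup>2 = exp (- 2 * ln s)"
      proof -
        have "exp (- 2 * ln s) = s powr (- 2)" using sp by (simp add: powr_def)
        also have "\<dots> = inverse (s powr 2)" by (simp add: powr_minus)
        also have "\<dots> = inverse (s ^ 2)" using sp by (simp add: powr_numeral)
        finally show ?thesis by (simp add: power_one_over inverse_eq_divide)
      qed
      finally have rb: "(r / (1 + r * s))\<^sup>2 \<le> exp (- 2 * ln s)" .
      have "exp X * (r / (1 + r * s))\<^sup>2 \<le> exp X * exp (- 2 * ln s)"
        by (intro mult_left_mono rb) auto
      also have "\<dots> = exp (X - 2 * ln s)" by (simp add: exp_add[symmetric])
      also have "\<dots> \<le> exp Lam"
      proof -
        have "0 \<le> \<alpha> - \<delta> - 2" using d2 dpos by linarith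
        from mult_nonneg_nonpos[OF this lns] have "(\<alpha> - \<delta> - 2) * ln s \<le> 0" .
        moreover have "(\<alpha> - \<delta>) * ln s = (\<alpha> - \<delta> - 2) * ln s + 2 * ln s" by (simp add: algebra_simps)
        ultimately have "X - 2 * ln s \<le> Lam" using Xb by linarith
        thus ?thesis by simp
      qed
      finally show ?thesis unfolding X_def K1_def by simp
    next
      case False
      have "\<bar>Re (psi k (r * s))\<bar> \<le> c * \<bar>r * s\<bar>" by (rule Re_psi_abs)
      also have "\<dots> \<le> c * V0"
      proof -
        have "\<bar>r * s\<bar> \<le> V0" using False rp s0 by (simp add: abs_mult)
        thus ?thesis using c_nonneg by (rule mult_left_mono)
      qed
      finally have a: "- Re (psi k (r * s)) \<le> c * V0" by simp
      have "ell r - ell V0 \<le> \<delta> * (ln r - ln V0) + Lam" by (rule P[OF order_refl r])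
      hence b: "Re (psi k r) \<le> ell V0 + \<delta> * (ln r - ln V0) + Lam - \<alpha> * ln r"
        unfolding ell_def[of r] by simp
      have lnr: "ln r \<ge> 0" using r V0 by simp
      have "1 \<le> 1 + r * s" using rp s0 by simp
      hence "r / (1 + r * s) \<le> r / 1" using rp by (intro divide_left_mono) auto
      hence "r / (1 + r * s) \<le> r" by simp
      hence "(r / (1 + r * s))\<^sup>2 \<le> r\<^sup>2" using rho0 by (intro power_mono) auto
      also have "r\<^sup>2 = exp (2 * ln r)"
      proof -
        have "exp (2 * ln r) = r powr 2" using rp by (simp add: powr_def)
        also have "\<dots> = r ^ 2" using rp by (simp add: powr_numeral)
        finally show ?thesis by simp
      qed
      finally have rb: "(r / (1 + r * s))\<^sup>2 \<le> exp (2 * ln r)" .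
      have "exp X * (r / (1 + r * s))\<^sup>2 \<le> exp X * exp (2 * ln r)"
        by (intro mult_left_mono rb) auto
      also have "\<dots> = exp (X + 2 * ln r)" by (simp add: exp_add[symmetric])
      also have "\<dots> \<le> K2"
      proof -
        have "\<delta> + 2 - \<alpha> \<le> 0" using d2 dpos by linarith
        from mult_nonpos_nonneg[OF this lnr] have "(\<delta> + 2 - \<alpha>) * ln r \<le> 0" .
        moreover have "(\<delta> + 2 - \<alpha>) * ln r = \<delta> * ln r + 2 * ln r - \<alpha> * ln r" by (simp add: algebra_simps)
        moreover have "\<delta> * (ln r - ln V0) = \<delta> * ln r - \<delta> * ln V0" by (simp add: algebra_simps)
        ultimately have "X + 2 * ln r \<le> ell V0 + Lam + c * V0 - \<delta> * ln V0"
          using a b X_def by argo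
        thus ?thesis unfolding K2_def exp_le_cancel_iff .
      qed
      finally show ?thesis unfolding X_def by simp
    qed
  qed
  have "\<forall>r \<ge> V0. \<forall>t. \<bar>t\<bar> \<le> 1 \<longrightarrow>
     exp (Re (psi k r) - Re (psi k (r * t))) * (r / (1 + r * \<bar>t\<bar>))\<^sup>2 \<le> max K1 K2"
  proof (intro allI impI)
    fix r t :: real assume r: "r \<ge> V0" and t: "\<bar>t\<bar> \<le> 1"
    have "Re (psi k (r * t)) = Re (psi k (r * \<bar>t\<bar>))"
    proof (cases "t \<ge> 0")
      case True thus ?thesis by simp
    next
      case False
      hence "r * t = - (r * \<bar>t\<bar>)" by simp
      thus ?thesis using Re_psi_even by simp
    qed
    thus "exp (Re (psi k r) - Re (psi k (r * t))) * (r / (1 + r * \<bar>t\<bar>))\<^sup>2 \<le> max K1 K2"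
      using main[OF r _ t] by simp
  qed
  thus ?thesis using V0 by blast
qed

end

lemma ibp:
  fixes f f' :: "real \<Rightarrow> complex" and x :: real
  assumes d: "\<And>t. (f has_vector_derivative f' t) (at t)" and fm: "f (-1) = 0" and fp: "f 1 = 0"
  defines "e \<equiv> \<lambda>t. exp (- \<i> * complex_of_real (t * x))"
  shows "((\<lambda>t. e t * f' t) has_integral (\<i> * complex_of_real x * integral {-1..1} (\<lambda>t. e t * f t))) {-1..1}"
proof -
  have de: "(e has_vector_derivative (- \<i> * complex_of_real x * e t)) (at t)" for t
  proof -
    have "((\<lambda>z. exp (- \<i> * z * complex_of_real x)) has_field_derivative
        (- \<i> * complex_of_real x * exp (- \<i> * complex_of_real t * complex_of_real x))) (at (complex_of_real t))"
      by (auto intro!: derivative_eq_intros simp: algebra_simps)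
    from field_vector_diff_chain_at[OF has_vector_derivative_of_real[OF DERIV_ident] this]
    show ?thesis unfolding e_def by (simp add: o_def algebra_simps)
  qed
  have dp: "((\<lambda>t. e t * f t) has_vector_derivative (e t * f' t + (- \<i> * complex_of_real x * e t) * f t)) (at t)" for t
    using has_vector_derivative_mult[OF de d] by simp
  have ftc: "((\<lambda>t. e t * f' t + (- \<i> * complex_of_real x * e t) * f t) has_integral (e 1 * f 1 - e (-1) * f (-1))) {-1..1}"
  proof (rule fundamental_theorem_of_calculus)
    fix t :: real assume "t \<in> {-1..1}"
    show "((\<lambda>t. e t * f t) has_vector_derivative (e t * f' t + (- \<i> * complex_of_real x * e t) * f t)) (at t within {-1..1})"
      by (rule has_vector_derivative_at_within[OF dp])
  qed simp
  have cf: "continuous_on {-1..1} (\<lambda>t. e t * f t)"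
    using dp by (intro continuous_on_vector_derivative) (auto intro: has_vector_derivative_at_within)
  have ief: "((\<lambda>t. e t * f t) has_integral integral {-1..1} (\<lambda>t. e t * f t)) {-1..1}"
    using integrable_continuous_interval[OF cf] by (simp add: integrable_integral)
  have "((\<lambda>t. (e t * f' t + (- \<i> * complex_of_real x * e t) * f t) - (- \<i> * complex_of_real x) * (e t * f t))
      has_integral ((e 1 * f 1 - e (-1) * f (-1)) - (- \<i> * complex_of_real x) * integral {-1..1} (\<lambda>t. e t * f t))) {-1..1}"
    by (rule has_integral_diff[OF ftc has_integral_mult_right[OF ief]])
  thus ?thesis using fm fp by (simp add: algebra_simps)
qed

lemma vd_eq: "(f has_vector_derivative X) F \<Longrightarrow> X = Y \<Longrightarrow> (f has_vector_derivative Y) F"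
  by simp

locale L5G = L5P +
  fixes W :: "real \<Rightarrow> real" and D :: "nat \<Rightarrow> real \<Rightarrow> complex"
  assumes D0: "D 0 = ftW W"
    and Dd: "\<And>j u. j < 3 \<Longrightarrow> (D j has_vector_derivative D (Suc j) u) (at u)"
    and D3c: "continuous_on UNIV (D 3)"
    and W0: "\<And>u. \<bar>u\<bar> > 1 \<Longrightarrow> ftW W u = 0"
begin

lemma D_zero_out: "j \<le> 3 \<Longrightarrow> \<bar>u\<bar> > 1 \<Longrightarrow> D j u = 0"
proof (induction j arbitrary: u)
  case 0 thus ?case using W0 D0 by simp
next
  case (Suc j)
  have d1: "(D j has_vector_derivative D (Suc j) u) (at u)" using Dd Suc.prems by simp
  have "((\<lambda>_. 0::complex) has_vector_derivative 0) (at u)" by simp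
  hence d2: "(D j has_vector_derivative 0) (at u)"
    by (rule has_vector_derivative_transform_within_open[where S = "{v. \<bar>v\<bar> > 1}"])
       (use Suc in \<open>auto intro!: open_Collect_less continuous_intros\<close>)
  show ?case using vector_derivative_unique_at[OF d1 d2] .
qed

lemma D_cont: "j \<le> 3 \<Longrightarrow> continuous_on UNIV (D j)"
proof (cases "j = 3")
  case True thus ?thesis using D3c by simp
next
  case False
  assume "j \<le> 3"
  hence "j < 3" using False by simp
  thus ?thesis by (intro continuous_on_vector_derivative) (auto intro: has_vector_derivative_at_within Dd)
qed

lemma D_pm1: assumes "j \<le> 3" shows "D j 1 = 0" "D j (-1) = 0"
proof -
  have cl: "closed {u. D j u = (\<lambda>_. 0) u}" by (rule closed_Collect_eq[OF D_cont[OF assms]]) simp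
  have "{1<..} \<subseteq> {u. D j u = 0}" using D_zero_out[OF assms] by auto
  hence "closure {1<..} \<subseteq> {u. D j u = 0}" using cl by (intro closure_minimal) auto
  thus "D j 1 = 0" by auto
  have "{..<-1} \<subseteq> {u. D j u = 0}" using D_zero_out[OF assms] by auto
  hence "closure {..<-1} \<subseteq> {u. D j u = 0}" using cl by (intro closure_minimal) auto
  thus "D j (-1) = 0" by auto
qed

lemma D_bound: "\<exists>d\<ge>1. \<forall>j\<le>3. \<forall>u. cmod (D j u) \<le> d"
proof -
  have "\<exists>b. \<forall>u\<in>{-1..1}. cmod (D j u) \<le> b" if "j \<le> 3" for j
  proof -
    have "compact (D j ` {-1..1})"
      by (rule compact_continuous_image[OF continuous_on_subset[OF D_cont[OF that]]]) auto
    hence "bounded (D j ` {-1..1})" by (rule compact_imp_bounded)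
    thus ?thesis unfolding bounded_iff by auto
  qed
  hence "\<forall>j\<in>{..3}. \<exists>b. \<forall>u\<in>{-1..1}. cmod (D j u) \<le> b" by auto
  from bchoice[OF this] obtain b where b0: "\<forall>j\<in>{..3}. \<forall>u\<in>{-1..1}. cmod (D j u) \<le> b j"
    by blast
  have b: "\<And>j u. j \<le> 3 \<Longrightarrow> u \<in> {-1..1} \<Longrightarrow> cmod (D j u) \<le> b j" using b0 by auto
  define d where "d = max 1 (Max (b ` {..3}))"
  have "\<forall>j\<le>3. \<forall>u. cmod (D j u) \<le> d"
  proof (intro allI impI)
    fix j u assume j: "j \<le> (3::nat)"
    show "cmod (D j u) \<le> d"
    proof (cases "\<bar>u\<bar> > 1")
      case True thus ?thesis using D_zero_out[OF j] unfolding d_def by simp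
    next
      case False
      hence "u \<in> {-1..1}" by auto
      hence "cmod (D j u) \<le> b j" using b[OF j] by blast
      also have "b j \<le> Max (b ` {..3})" using j by (intro Max_ge) auto
      finally show ?thesis unfolding d_def by simp
    qed
  qed
  thus ?thesis unfolding d_def by (intro exI[of _ "max 1 (Max (b ` {..3}))"]) auto
qed

end

lemma scaled_vd:
  fixes f :: "real \<Rightarrow> complex" and h :: real
  assumes d: "\<And>u. (f has_vector_derivative f' u) (at u)"
  shows "((\<lambda>t. f (t / h)) has_vector_derivative (complex_of_real (1 / h) * f' (t / h))) (at t)"
proof -
  have "((\<lambda>t. t / h) has_vector_derivative (1 / h)) (at t)"
    using has_real_derivative_iff_has_vector_derivative[THEN iffD1, OF DERIV_cdivide[OF DERIV_ident, of h]]
    by simp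
  from vector_diff_chain_at[OF this d[of "t / h"]]
  show ?thesis by (simp add: o_def scaleR_conv_of_real)
qed

locale L5H = L5G +
  fixes h :: real
  assumes hpos: "h > 0"
begin

definition Gf :: "real \<Rightarrow> complex" where "Gf t = exp (- psi k (t / h))"
definition q1 :: "real \<Rightarrow> complex" where "q1 t = - (\<i> / complex_of_real h) * phik k (t / h)"
definition q1d :: "real \<Rightarrow> complex" where "q1d t = - (\<i> / complex_of_real h ^ 2) * p1 k (t / h)"
definition q1dd :: "real \<Rightarrow> complex" where "q1dd t = - (\<i> / complex_of_real h ^ 3) * p2 k (t / h)"

lemma dGf: "(Gf has_vector_derivative q1 t * Gf t) (at t)"
proof -
  have a: "((\<lambda>t. psi k (t / h)) has_vector_derivative (complex_of_real (1 / h) * (\<i> * phik k (t / h)))) (at t)"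
    by (rule scaled_vd[OF psi_deriv])
  have b: "((\<lambda>t. - psi k (t / h)) has_vector_derivative - (complex_of_real (1 / h) * (\<i> * phik k (t / h)))) (at t)"
    using has_vector_derivative_minus[OF a] .
  from field_vector_diff_chain_at[OF b DERIV_exp]
  show ?thesis unfolding Gf_def q1_def using hpos by (simp add: o_def field_simps)
qed

lemma dq1: "(q1 has_vector_derivative q1d t) (at t)"
proof -
  have a: "((\<lambda>t. phik k (t / h)) has_vector_derivative (complex_of_real (1 / h) * p1 k (t / h))) (at t)"
    by (rule scaled_vd[OF phik_deriv])
  from has_vector_derivative_mult_right[OF a, of "- (\<i> / complex_of_real h)"]
  show ?thesis unfolding q1_def[abs_def] q1d_def using hpos by (simp add: field_simps power2_eq_square)
qed

lemma dq1d: "(q1d has_vector_derivative q1dd t) (at t)"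
proof -
  have a: "((\<lambda>t. p1 k (t / h)) has_vector_derivative (complex_of_real (1 / h) * p2 k (t / h))) (at t)"
    by (rule scaled_vd[OF p1_deriv])
  from has_vector_derivative_mult_right[OF a, of "- (\<i> / complex_of_real h ^ 2)"]
  show ?thesis unfolding q1d_def[abs_def] q1dd_def using hpos by (simp add: field_simps power2_eq_square power3_eq_cube)
qed

definition P :: "nat \<Rightarrow> real \<Rightarrow> complex" where
  "P j t = (if j = 0 then D 0 t
    else if j = 1 then D 1 t + D 0 t * q1 t
    else if j = 2 then D 2 t + 2 * D 1 t * q1 t + D 0 t * (q1d t + q1 t * q1 t)
    else D 3 t + 3 * D 2 t * q1 t + 3 * D 1 t * (q1d t + q1 t * q1 t)
       + D 0 t * (q1dd t + 3 * q1 t * q1d t + q1 t * q1 t * q1 t))"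

definition g :: "nat \<Rightarrow> real \<Rightarrow> complex" where "g j t = P j t * Gf t"

lemma D0' : "(D 0 has_vector_derivative D 1 t) (at t)" using Dd[of 0] by simp
lemma D1' : "(D 1 has_vector_derivative D 2 t) (at t)" using Dd[of 1 t] by (simp add: numeral_2_eq_2 One_nat_def)
lemma D2' : "(D 2 has_vector_derivative D 3 t) (at t)" using Dd[of 2 t] by (simp add: numeral_3_eq_3 numeral_2_eq_2 One_nat_def)

lemma dP0: "(P 0 has_vector_derivative (P 1 t - P 0 t * q1 t)) (at t)"
proof -
  have e: "P 0 = D 0" unfolding P_def by auto
  show ?thesis unfolding e by (rule vd_eq[OF D0']) (simp add: P_def)
qed

lemma dP1: "(P 1 has_vector_derivative (P 2 t - P 1 t * q1 t)) (at t)"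
proof -
  have e: "P 1 = (\<lambda>t. D 1 t + D 0 t * q1 t)" unfolding P_def by auto
  show ?thesis unfolding e
    by (rule vd_eq[OF has_vector_derivative_add[OF D1' has_vector_derivative_mult[OF D0' dq1]]])
       (simp add: P_def algebra_simps)
qed

lemma dP2: "(P 2 has_vector_derivative (P 3 t - P 2 t * q1 t)) (at t)"
proof -
  have e: "P 2 = (\<lambda>t. D 2 t + 2 * D 1 t * q1 t + D 0 t * (q1d t + q1 t * q1 t))" unfolding P_def by auto
  show ?thesis unfolding e
    by (rule vd_eq[OF has_vector_derivative_add[OF has_vector_derivative_add[OF D2'
          has_vector_derivative_mult[OF has_vector_derivative_mult_right[OF D1', of 2] dq1]]
          has_vector_derivative_mult[OF D0' has_vector_derivative_add[OF dq1d has_vector_derivative_mult[OF dq1 dq1]]]]])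
       (simp add: P_def algebra_simps)
qed

lemma dg_gen:
  assumes "(P j has_vector_derivative (P j2 t - P j t * q1 t)) (at t)"
  shows "(g j has_vector_derivative g j2 t) (at t)"
proof -
  have "((\<lambda>t. P j t * Gf t) has_vector_derivative (P j t * (q1 t * Gf t) + (P j2 t - P j t * q1 t) * Gf t)) (at t)"
    by (rule has_vector_derivative_mult[OF assms dGf])
  thus ?thesis unfolding g_def[abs_def] by (rule vd_eq) (simp add: algebra_simps)
qed

lemma dg0: "(g 0 has_vector_derivative g 1 t) (at t)" by (rule dg_gen[OF dP0])
lemma dg1: "(g 1 has_vector_derivative g 2 t) (at t)" by (rule dg_gen[OF dP1])
lemma dg2: "(g 2 has_vector_derivative g 3 t) (at t)" by (rule dg_gen[OF dP2])

end

lemma poly_Q: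
  fixes b1 b2 b3 h E u :: real
  assumes b1: "0 \<le> b1" "b1 \<le> E * u" and b2: "0 \<le> b2" "b2 \<le> E * u\<^sup>2"
    and b3: "0 \<le> b3" "h * b3 \<le> E * u\<^sup>2"
    and u: "1/2 \<le> u" and h: "0 < h" "h \<le> 1" and hu: "h * u \<le> 1" and E: "1 \<le> E"
  shows "h * (1 + 3 * b1 + 3 * (b2 + b1 * b1) + (b3 + 3 * b1 * b2 + b1 * b1 * b1)) \<le> 21 * E ^ 3 * u\<^sup>2"
    and "1 + 2 * b1 + (b2 + b1 * b1) \<le> 21 * E ^ 3 * u\<^sup>2"
    and "1 + b1 \<le> 21 * E ^ 3 * u\<^sup>2"
    and "1 \<le> 21 * E ^ 3 * u\<^sup>2"
proof -
  have u0: "0 < u" using u by simp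
  have f1: "u \<le> 2 * u\<^sup>2" using u u0 by (simp add: power2_eq_square)
  have f2: "1 \<le> 4 * u\<^sup>2" using f1 u by linarith
  have E0: "0 \<le> E" using E by simp
  have u2: "0 \<le> u\<^sup>2" by simp
  have EE: "1 \<le> E * E" using mult_mono[OF E E] E0 by simp
  have E1: "E \<le> E ^ 3"
  proof -
    have "E * 1 \<le> E * (E * E)" using EE E0 by (rule mult_left_mono)
    thus ?thesis by (simp add: power3_eq_cube)
  qed
  have E2: "E * E \<le> E ^ 3"
  proof -
    have "(E * E) * 1 \<le> (E * E) * E" using E EE by (intro mult_left_mono) auto
    thus ?thesis by (simp add: power3_eq_cube)
  qed
  have E3: "1 \<le> E ^ 3" using E1 E by linarith
  have Eu0: "0 \<le> E * u" using E0 u0 by simp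
  have b11: "b1 * b1 \<le> (E * u) * (E * u)" using b1 by (intro mult_mono) auto
  have b111: "b1 * b1 * b1 \<le> (E * u) * (E * u) * (E * u)"
    using b11 b1 Eu0 by (intro mult_mono) auto
  have b12: "b1 * b2 \<le> (E * u) * (E * u\<^sup>2)" using b1 b2 Eu0 by (intro mult_mono) auto
  have t1: "h \<le> 4 * E ^ 3 * u\<^sup>2"
  proof -
    have "1 * (4 * u\<^sup>2) \<le> E ^ 3 * (4 * u\<^sup>2)" using E3 u2 by (intro mult_right_mono) auto
    thus ?thesis using h f2 by linarith
  qed
  have t2: "b1 \<le> 2 * E ^ 3 * u\<^sup>2"
  proof -
    have "b1 \<le> E * u" by (rule b1)
    also have "\<dots> \<le> E * (2 * u\<^sup>2)" using f1 E0 by (rule mult_left_mono)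
    also have "\<dots> \<le> E ^ 3 * (2 * u\<^sup>2)" using E1 u2 by (intro mult_right_mono) auto
    finally show ?thesis by (simp add: ac_simps)
  qed
  have t3: "b2 \<le> E ^ 3 * u\<^sup>2"
  proof -
    have "b2 \<le> E * u\<^sup>2" by (rule b2)
    also have "\<dots> \<le> E ^ 3 * u\<^sup>2" using E1 u2 by (rule mult_right_mono)
    finally show ?thesis .
  qed
  have t4: "b1 * b1 \<le> E ^ 3 * u\<^sup>2"
  proof -
    have "b1 * b1 \<le> (E * E) * u\<^sup>2" using b11 by (simp add: power2_eq_square ac_simps)
    also have "\<dots> \<le> E ^ 3 * u\<^sup>2" using E2 u2 by (rule mult_right_mono)
    finally show ?thesis .
  qed
  have t5: "h * (b1 * b2) \<le> E ^ 3 * u\<^sup>2"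
  proof -
    have "h * (b1 * b2) \<le> h * ((E * u) * (E * u\<^sup>2))" using b12 h by (intro mult_left_mono) auto
    also have "\<dots> = (E * E) * u\<^sup>2 * (h * u)" by (simp add: power2_eq_square ac_simps)
    also have "\<dots> \<le> (E * E) * u\<^sup>2 * 1" using hu E0 u2 by (intro mult_left_mono) auto
    also have "\<dots> \<le> E ^ 3 * u\<^sup>2" using mult_right_mono[OF E2 u2] by simp
    finally show ?thesis .
  qed
  have t6: "h * (b1 * b1 * b1) \<le> E ^ 3 * u\<^sup>2"
  proof -
    have "h * (b1 * b1 * b1) \<le> h * ((E * u) * (E * u) * (E * u))" using b111 h by (intro mult_left_mono) auto
    also have "\<dots> = E ^ 3 * u\<^sup>2 * (h * u)" by (simp add: power2_eq_square power3_eq_cube ac_simps)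
    also have "\<dots> \<le> E ^ 3 * u\<^sup>2 * 1" using hu mult_nonneg_nonneg[OF order_trans[OF zero_le_one E3] u2] by (intro mult_left_mono) auto
    finally show ?thesis by simp
  qed
  have t7: "h * b3 \<le> E ^ 3 * u\<^sup>2" using b3(2) mult_right_mono[OF E1 u2] by linarith
  have hb1: "h * b1 \<le> b1" using h b1 by (simp add: mult_left_le_one_le)
  have hb2: "h * b2 \<le> b2" using h b2 by (simp add: mult_left_le_one_le)
  have hb11: "h * (b1 * b1) \<le> b1 * b1" using h by (simp add: mult_left_le_one_le)
  show "h * (1 + 3 * b1 + 3 * (b2 + b1 * b1) + (b3 + 3 * b1 * b2 + b1 * b1 * b1)) \<le> 21 * E ^ 3 * u\<^sup>2"
    using t1 t2 t3 t4 t5 t6 t7 hb1 hb2 hb11 by (simp add: algebra_simps)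
  show "1 + 2 * b1 + (b2 + b1 * b1) \<le> 21 * E ^ 3 * u\<^sup>2"
    using t1 t2 t3 t4 f2 E3 mult_right_mono[OF E3, of "4 * u\<^sup>2"] by simp
  show "1 + b1 \<le> 21 * E ^ 3 * u\<^sup>2"
    using t2 f2 mult_right_mono[OF E3, of "4 * u\<^sup>2"] by simp
  show "1 \<le> 21 * E ^ 3 * u\<^sup>2"
    using f2 mult_right_mono[OF E3, of "4 * u\<^sup>2"] by simp
qed

context L5G begin

definition dB :: real where "dB = (SOME d. d \<ge> 1 \<and> (\<forall>j\<le>3. \<forall>u. cmod (D j u) \<le> d))"

lemma dB: "dB \<ge> 1" "\<And>j u. j \<le> 3 \<Longrightarrow> cmod (D j u) \<le> dB"
proof -
  have "dB \<ge> 1 \<and> (\<forall>j\<le>3. \<forall>u. cmod (D j u) \<le> dB)"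
    unfolding dB_def by (rule someI_ex[OF D_bound])
  thus "dB \<ge> 1" "\<And>j u. j \<le> 3 \<Longrightarrow> cmod (D j u) \<le> dB" by auto
qed

end

context L5H begin

definition rho :: "real \<Rightarrow> real" where "rho t = 1 / (h + \<bar>t\<bar>)"

lemma rho_pos: "rho t > 0" unfolding rho_def using hpos by simp

lemma hden: "(1 + \<bar>t / h\<bar>) * h = h + \<bar>t\<bar>"
  using hpos by (simp add: abs_divide field_simps)

lemma hden_pos: "h + \<bar>t\<bar> > 0" using hpos by simp

lemma q1_bound: "cmod (q1 t) \<le> c * rho t"
proof -
  have "cmod (q1 t) = cmod (phik k (t / h)) / h" unfolding q1_def using hpos by (simp add: norm_mult norm_divide)
  also have "\<dots> \<le> (c / (1 + \<bar>t / h\<bar>)) / h" using cb0[of "t / h"] hpos by (intro divide_right_mono) auto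
  also have "\<dots> = c / ((1 + \<bar>t / h\<bar>) * h)" by (simp add: divide_divide_eq_left)
  also have "\<dots> = c * rho t" unfolding hden rho_def by simp
  finally show ?thesis .
qed

lemma q1d_bound: "cmod (q1d t) \<le> c * rho t ^ 2"
proof -
  have "cmod (q1d t) = cmod (p1 k (t / h)) / h ^ 2" unfolding q1d_def using hpos by (simp add: norm_mult norm_divide norm_power)
  also have "\<dots> \<le> (c / (1 + \<bar>t / h\<bar>)\<^sup>2) / h ^ 2" using cb1[of "t / h"] hpos by (intro divide_right_mono) auto
  also have "\<dots> = c / ((1 + \<bar>t / h\<bar>) * h) ^ 2" by (simp add: divide_divide_eq_left power_mult_distrib)
  also have "\<dots> = c * rho t ^ 2" unfolding hden rho_def by (simp add: power_one_over)
  finally show ?thesis .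
qed

lemma q1dd_bound: "h * cmod (q1dd t) \<le> c * rho t ^ 2"
proof -
  have "cmod (q1dd t) = cmod (p2 k (t / h)) / h ^ 3" unfolding q1dd_def using hpos by (simp add: norm_mult norm_divide norm_power)
  also have "\<dots> \<le> (c / (1 + \<bar>t / h\<bar>)\<^sup>2) / h ^ 3" using cb2[of "t / h"] hpos by (intro divide_right_mono) auto
  finally have "h * cmod (q1dd t) \<le> h * ((c / (1 + \<bar>t / h\<bar>)\<^sup>2) / h ^ 3)" using hpos by (intro mult_left_mono) auto
  also have "\<dots> = c / ((1 + \<bar>t / h\<bar>) * h) ^ 2" using hpos by (simp add: power_mult_distrib power2_eq_square power3_eq_cube)
  also have "\<dots> = c * rho t ^ 2" unfolding hden rho_def by (simp add: power_one_over)
  finally show ?thesis .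
qed

definition KP :: real where "KP = dB * (21 * (1 + c) ^ 3)"

lemma P_bounds:
  assumes t: "\<bar>t\<bar> \<le> 1" and h1: "h \<le> 1"
  shows "\<And>j. j \<le> 2 \<Longrightarrow> cmod (P j t) \<le> KP * rho t ^ 2" and "h * cmod (P 3 t) \<le> KP * rho t ^ 2"
proof -
  define a0 a1 a2 a3 where "a0 = cmod (D 0 t)" "a1 = cmod (D 1 t)" "a2 = cmod (D 2 t)" "a3 = cmod (D 3 t)"
  define b1 b2 b3 where "b1 = cmod (q1 t)" "b2 = cmod (q1d t)" "b3 = cmod (q1dd t)"
  define E where "E = 1 + c"
  define u where "u = rho t"
  have a: "0 \<le> a0" "a0 \<le> dB" "0 \<le> a1" "a1 \<le> dB" "0 \<le> a2" "a2 \<le> dB" "0 \<le> a3" "a3 \<le> dB"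
    unfolding a0_a1_a2_a3_def using dB(2)[of 0 t] dB(2)[of 1 t] dB(2)[of 2 t] dB(2)[of 3 t] by auto
  have u: "1/2 \<le> u" unfolding u_def rho_def using hpos t h1 by (simp add: field_simps)
  have hu: "h * u \<le> 1" unfolding u_def rho_def using hpos by (simp add: field_simps)
  have E: "1 \<le> E" unfolding E_def using c_nonneg by simp
  have cE: "c \<le> E" unfolding E_def by simp
  have u0: "0 \<le> u" using u by simp
  have b: "0 \<le> b1" "b1 \<le> E * u" "0 \<le> b2" "b2 \<le> E * u\<^sup>2" "0 \<le> b3" "h * b3 \<le> E * u\<^sup>2"
  proof -
    show "0 \<le> b1" "0 \<le> b2" "0 \<le> b3" unfolding b1_b2_b3_def by auto
    have "c * rho t \<le> E * rho t" by (rule mult_right_mono[OF cE]) (simp add: rho_pos less_imp_le)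
    thus "b1 \<le> E * u" unfolding b1_b2_b3_def u_def using q1_bound[of t] by linarith
    have "c * rho t ^ 2 \<le> E * rho t ^ 2" by (rule mult_right_mono[OF cE]) simp
    thus "b2 \<le> E * u\<^sup>2" "h * b3 \<le> E * u\<^sup>2" unfolding b1_b2_b3_def u_def
      using q1d_bound[of t] q1dd_bound[of t] by linarith+
  qed
  note Q = poly_Q[OF b(1,2,3,4,5,6) u hpos h1 hu E]
  have KPe: "KP * rho t ^ 2 = dB * (21 * E ^ 3 * u\<^sup>2)" unfolding KP_def E_def u_def by simp
  have d0: "0 \<le> dB" using dB(1) by simp
  show "cmod (P j t) \<le> KP * rho t ^ 2" if j: "j \<le> 2" for j
  proof -
    have "j = 0 \<or> j = 1 \<or> j = 2" using j by auto
    moreover have "cmod (P 0 t) \<le> KP * rho t ^ 2"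
    proof -
      have "cmod (P 0 t) = a0" unfolding P_def a0_a1_a2_a3_def by simp
      also have "\<dots> \<le> dB * 1" using a by simp
      also have "\<dots> \<le> dB * (21 * E ^ 3 * u\<^sup>2)" using Q(4) d0 by (rule mult_left_mono)
      finally show ?thesis unfolding KPe .
    qed
    moreover have "cmod (P 1 t) \<le> KP * rho t ^ 2"
    proof -
      have "cmod (P 1 t) \<le> a1 + a0 * b1" unfolding P_def a0_a1_a2_a3_def b1_b2_b3_def
        using norm_triangle_ineq[of "D 1 t" "D 0 t * q1 t"] by (simp add: norm_mult)
      also have "\<dots> \<le> dB + dB * b1" using a b by (intro add_mono mult_right_mono) auto
      also have "\<dots> = dB * (1 + b1)" by (simp add: algebra_simps)
      also have "\<dots> \<le> dB * (21 * E ^ 3 * u\<^sup>2)" using Q(3) d0 by (rule mult_left_mono)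
      finally show ?thesis unfolding KPe .
    qed
    moreover have "cmod (P 2 t) \<le> KP * rho t ^ 2"
    proof -
      have n1: "cmod (q1d t + q1 t * q1 t) \<le> b2 + b1 * b1" unfolding b1_b2_b3_def
        using norm_triangle_ineq[of "q1d t" "q1 t * q1 t"] by (simp add: norm_mult)
      have "cmod (P 2 t) \<le> cmod (D 2 t + 2 * D 1 t * q1 t) + cmod (D 0 t * (q1d t + q1 t * q1 t))"
        unfolding P_def by (simp add: norm_triangle_ineq)
      also have "\<dots> \<le> (a2 + 2 * a1 * b1) + a0 * (b2 + b1 * b1)"
      proof (rule add_mono)
        show "cmod (D 2 t + 2 * D 1 t * q1 t) \<le> a2 + 2 * a1 * b1" unfolding a0_a1_a2_a3_def b1_b2_b3_def
          using norm_triangle_ineq[of "D 2 t" "2 * D 1 t * q1 t"] by (simp add: norm_mult)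
        show "cmod (D 0 t * (q1d t + q1 t * q1 t)) \<le> a0 * (b2 + b1 * b1)" unfolding a0_a1_a2_a3_def
          using n1 by (simp add: norm_mult mult_left_mono)
      qed
      also have "\<dots> \<le> (dB + 2 * dB * b1) + dB * (b2 + b1 * b1)"
        using a b by (intro add_mono mult_right_mono mult_left_mono) auto
      also have "\<dots> = dB * (1 + 2 * b1 + (b2 + b1 * b1))" by (simp add: algebra_simps)
      also have "\<dots> \<le> dB * (21 * E ^ 3 * u\<^sup>2)" using Q(2) d0 by (rule mult_left_mono)
      finally show ?thesis unfolding KPe .
    qed
    ultimately show ?thesis by auto
  qed
  show "h * cmod (P 3 t) \<le> KP * rho t ^ 2"
  proof -
    have n1: "cmod (q1d t + q1 t * q1 t) \<le> b2 + b1 * b1" unfolding b1_b2_b3_def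
      using norm_triangle_ineq[of "q1d t" "q1 t * q1 t"] by (simp add: norm_mult)
    have n2: "cmod (q1dd t + 3 * q1 t * q1d t + q1 t * q1 t * q1 t) \<le> b3 + 3 * b1 * b2 + b1 * b1 * b1"
      unfolding b1_b2_b3_def
      using norm_triangle_ineq[of "q1dd t + 3 * q1 t * q1d t" "q1 t * q1 t * q1 t"]
        norm_triangle_ineq[of "q1dd t" "3 * q1 t * q1d t"] by (simp add: norm_mult)
    have "cmod (P 3 t) \<le> cmod (D 3 t + 3 * D 2 t * q1 t) + cmod (3 * D 1 t * (q1d t + q1 t * q1 t))
        + cmod (D 0 t * (q1dd t + 3 * q1 t * q1d t + q1 t * q1 t * q1 t))"
      unfolding P_def using norm_triangle_ineq[of "D 3 t + 3 * D 2 t * q1 t + 3 * D 1 t * (q1d t + q1 t * q1 t)"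
          "D 0 t * (q1dd t + 3 * q1 t * q1d t + q1 t * q1 t * q1 t)"]
        norm_triangle_ineq[of "D 3 t + 3 * D 2 t * q1 t" "3 * D 1 t * (q1d t + q1 t * q1 t)"]
      by simp
    also have "\<dots> \<le> (a3 + 3 * a2 * b1) + 3 * a1 * (b2 + b1 * b1) + a0 * (b3 + 3 * b1 * b2 + b1 * b1 * b1)"
    proof (intro add_mono)
      show "cmod (D 3 t + 3 * D 2 t * q1 t) \<le> a3 + 3 * a2 * b1" unfolding a0_a1_a2_a3_def b1_b2_b3_def
        using norm_triangle_ineq[of "D 3 t" "3 * D 2 t * q1 t"] by (simp add: norm_mult)
      show "cmod (3 * D 1 t * (q1d t + q1 t * q1 t)) \<le> 3 * a1 * (b2 + b1 * b1)" unfolding a0_a1_a2_a3_def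
        using n1 by (simp add: norm_mult mult_left_mono)
      show "cmod (D 0 t * (q1dd t + 3 * q1 t * q1d t + q1 t * q1 t * q1 t)) \<le> a0 * (b3 + 3 * b1 * b2 + b1 * b1 * b1)"
        unfolding a0_a1_a2_a3_def using n2 by (simp add: norm_mult mult_left_mono)
    qed
    also have "\<dots> \<le> (dB + 3 * dB * b1) + 3 * dB * (b2 + b1 * b1) + dB * (b3 + 3 * b1 * b2 + b1 * b1 * b1)"
      using a b by (intro add_mono mult_right_mono mult_left_mono) auto
    also have "\<dots> = dB * (1 + 3 * b1 + 3 * (b2 + b1 * b1) + (b3 + 3 * b1 * b2 + b1 * b1 * b1))" by (simp add: algebra_simps)
    finally have "h * cmod (P 3 t) \<le> h * (dB * (1 + 3 * b1 + 3 * (b2 + b1 * b1) + (b3 + 3 * b1 * b2 + b1 * b1 * b1)))"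
      using hpos by (intro mult_left_mono) auto
    also have "\<dots> = dB * (h * (1 + 3 * b1 + 3 * (b2 + b1 * b1) + (b3 + 3 * b1 * b2 + b1 * b1 * b1)))" by simp
    also have "\<dots> \<le> dB * (21 * E ^ 3 * u\<^sup>2)" using Q(1) d0 by (rule mult_left_mono)
    finally show ?thesis unfolding KPe .
  qed
qed

lemma g_pm1: assumes "j \<le> 2" shows "g j 1 = 0" "g j (-1) = 0"
proof -
  have z: "D i 1 = 0" "D i (-1) = 0" if "i \<le> 3" for i using D_pm1[OF that] by auto
  have "j = 0 \<or> j = 1 \<or> j = 2" using assms by auto
  thus "g j 1 = 0" "g j (-1) = 0" unfolding g_def P_def using z[of 0] z[of 1] z[of 2] by auto
qed

lemma norm_Gf: "cmod (Gf t) = exp (- Re (psi k (t / h)))"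
  unfolding Gf_def by (simp add: norm_exp_eq_Re)

end

context L5H begin

definition ee :: "real \<Rightarrow> real \<Rightarrow> complex" where "ee x t = exp (- \<i> * complex_of_real (t * x))"

lemma cont_g: "continuous_on S (g j)" if "j \<le> 2"
proof -
  have c0: "continuous_on S (g 0)" by (rule continuous_on_vector_derivative[OF has_vector_derivative_at_within[OF dg0]])
  have c1: "continuous_on S (g 1)" by (rule continuous_on_vector_derivative[OF has_vector_derivative_at_within[OF dg1]])
  have c2: "continuous_on S (g 2)" by (rule continuous_on_vector_derivative[OF has_vector_derivative_at_within[OF dg2]])
  have "j = 0 \<or> j = 1 \<or> j = 2" using that by auto
  thus ?thesis using c0 c1 c2 by auto
qed

lemma cont_eg: "j \<le> 2 \<Longrightarrow> continuous_on {-1..1} (\<lambda>t. ee x t * g j t)"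
  unfolding ee_def by (intro continuous_intros cont_g)

lemma Kn_eq: "Kn W k h x = complex_of_real (1 / (2 * pi)) * integral {-1..1} (\<lambda>t. ee x t * g 0 t)"
proof -
  have pt: "exp (- \<i> * complex_of_real (t * x)) * ftW W t / phi k (t / h) = indicator {-1..1} t *\<^sub>R (ee x t * g 0 t)" for t
  proof (cases "\<bar>t\<bar> > 1")
    case True
    hence "t \<notin> {-1..1}" by auto
    thus ?thesis using W0[OF True] by simp
  next
    case False
    hence "t \<in> {-1..1}" by auto
    moreover have "g 0 t = ftW W t * exp (- psi k (t / h))" unfolding g_def P_def Gf_def D0 by simp
    ultimately show ?thesis unfolding ee_def phi_psi by (simp add: exp_minus divide_inverse)
  qed
  have si: "set_integrable lborel {-1..1} (\<lambda>t. ee x t * g 0 t)"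
    unfolding set_integrable_def by (rule borel_integrable_compact[OF compact_Icc cont_eg]) simp
  have "(LINT t|lborel. exp (- \<i> * complex_of_real (t * x)) * ftW W t / phi k (t / h))
      = (LINT t:{-1..1}|lborel. ee x t * g 0 t)"
    unfolding set_lebesgue_integral_def pt ..
  also have "\<dots> = integral {-1..1} (\<lambda>t. ee x t * g 0 t)" by (rule set_borel_integral_eq_integral(2)[OF si])
  finally show ?thesis unfolding Kn_def by simp
qed

definition Ix :: "real \<Rightarrow> nat \<Rightarrow> complex" where "Ix x j = integral {-1..1} (\<lambda>t. ee x t * g j t)"

lemma I_hasint0: "((\<lambda>t. ee x t * g 0 t) has_integral Ix x 0) {-1..1}"
  unfolding Ix_def using integrable_continuous_interval[OF cont_eg[of 0 x]] by (simp add: integrable_integral)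

lemma I_step:
  assumes "\<And>t. (g j has_vector_derivative g j2 t) (at t)" and "j \<le> 2"
  shows "((\<lambda>t. ee x t * g j2 t) has_integral (\<i> * complex_of_real x * Ix x j)) {-1..1}" "Ix x j2 = \<i> * complex_of_real x * Ix x j"
proof -
  show h: "((\<lambda>t. ee x t * g j2 t) has_integral (\<i> * complex_of_real x * Ix x j)) {-1..1}"
    unfolding Ix_def ee_def using ibp[OF assms(1) g_pm1(2)[OF assms(2)] g_pm1(1)[OF assms(2)], of x] by simp
  thus "Ix x j2 = \<i> * complex_of_real x * Ix x j" unfolding Ix_def by (rule integral_unique)
qed

lemma I1: "((\<lambda>t. ee x t * g 1 t) has_integral Ix x 1) {-1..1}" "Ix x 1 = \<i> * complex_of_real x * Ix x 0"
  using I_step[OF dg0, of x] by auto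
lemma I2: "((\<lambda>t. ee x t * g 2 t) has_integral Ix x 2) {-1..1}" "Ix x 2 = \<i> * complex_of_real x * Ix x 1"
  using I_step[OF dg1, of x] by auto
lemma I3: "((\<lambda>t. ee x t * g 3 t) has_integral Ix x 3) {-1..1}" "Ix x 3 = \<i> * complex_of_real x * Ix x 2"
  using I_step[OF dg2, of x] by auto

lemma norm_ee: "cmod (ee x t) = 1"
  unfolding ee_def by (simp add: norm_exp_eq_Re)

lemma I_bound:
  fixes f :: "real \<Rightarrow> complex"
  assumes hint: "(f has_integral i) {-1..1}" and b: "\<And>t. t \<in> {-1..1} \<Longrightarrow> cmod (f t) \<le> Bd" and B0: "0 \<le> Bd"
  shows "cmod i \<le> 2 * Bd"
proof -
  have "norm i \<le> Bd * measure lborel (cbox (-1) (1::real))"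
  proof (rule has_integral_bound[OF B0])
    show "(f has_integral i) (cbox (-1) 1)" using hint by (simp add: box_real)
    show "\<And>x. x \<in> cbox (-1) 1 \<Longrightarrow> norm (f x) \<le> Bd" using b by simp
  qed
  thus ?thesis by simp
qed

end

lemma divide_le_self: "0 \<le> a \<Longrightarrow> 1 \<le> b \<Longrightarrow> a / b \<le> (a::real)"
proof -
  assume a: "0 \<le> a" and b: "1 \<le> b"
  have "a * 1 \<le> a * b" using b a by (rule mult_left_mono)
  thus ?thesis using b by (simp add: divide_le_eq)
qed

context L5H begin

lemma rho_alt: "(1 / h) / (1 + 1 / h * \<bar>t\<bar>) = rho t"
  unfolding rho_def using hpos by (simp add: field_simps)

lemma KP_nonneg: "KP \<ge> 0"
  unfolding KP_def using dB(1) c_nonneg by simp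

lemma main_h:
  assumes Kb: "\<forall>t. \<bar>t\<bar> \<le> 1 \<longrightarrow> exp (Re (psi k (1 / h)) - Re (psi k (1 / h * t))) * ((1 / h) / (1 + 1 / h * \<bar>t\<bar>))\<^sup>2 \<le> K"
    and h1: "h \<le> 1"
    and AL: "h powr \<alpha> * L (1 / h) \<le> (2 / B) * cmod (phi k (1 / h))" and L0: "0 \<le> L (1 / h)"
  shows "h powr \<alpha> * L (1 / h) * cmod (Kn W k h x) + h powr (\<alpha> + 1) * L (1 / h) * cmod (complex_of_real x * Kn W k h x)
     \<le> (8 * KP * K / B) * (1 / max 1 (x\<^sup>2))"
proof -
  define m where "m = cmod (phi k (1 / h))"
  have m_eq: "m = exp (Re (psi k (1 / h)))" unfolding m_def by (rule norm_phi)
  have m0: "m > 0" unfolding m_eq by simp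
  have K0: "K \<ge> 0" using Kb[rule_format, of 0] by (smt (verit) exp_gt_zero zero_le_power2 mult_nonneg_nonneg)
  have GB: "m * cmod (Gf t) * rho t ^ 2 \<le> K" if t: "\<bar>t\<bar> \<le> 1" for t
  proof -
    have "m * cmod (Gf t) = exp (Re (psi k (1 / h)) - Re (psi k (1 / h * t)))"
      unfolding m_eq norm_Gf by (simp add: exp_diff exp_minus divide_inverse mult.commute)
    thus ?thesis using Kb[rule_format, OF t] unfolding rho_alt by simp
  qed
  have gB: "m * cmod (g j t) \<le> KP * K" if j: "j \<le> 2" and t: "\<bar>t\<bar> \<le> 1" for j t
  proof -
    have "m * cmod (g j t) = cmod (P j t) * (m * cmod (Gf t))" unfolding g_def by (simp add: norm_mult ac_simps)
    also have "\<dots> \<le> (KP * rho t ^ 2) * (m * cmod (Gf t))"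
      using P_bounds(1)[OF t h1 j] m0 by (intro mult_right_mono) auto
    also have "\<dots> = KP * (m * cmod (Gf t) * rho t ^ 2)" by (simp add: ac_simps)
    also have "\<dots> \<le> KP * K" using GB[OF t] KP_nonneg by (rule mult_left_mono)
    finally show ?thesis .
  qed
  have g3B: "m * h * cmod (g 3 t) \<le> KP * K" if t: "\<bar>t\<bar> \<le> 1" for t
  proof -
    have "m * h * cmod (g 3 t) = (h * cmod (P 3 t)) * (m * cmod (Gf t))" unfolding g_def by (simp add: norm_mult ac_simps)
    also have "\<dots> \<le> (KP * rho t ^ 2) * (m * cmod (Gf t))"
      using P_bounds(2)[OF t h1] m0 by (intro mult_right_mono) auto
    also have "\<dots> = KP * (m * cmod (Gf t) * rho t ^ 2)" by (simp add: ac_simps)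
    also have "\<dots> \<le> KP * K" using GB[OF t] KP_nonneg by (rule mult_left_mono)
    finally show ?thesis .
  qed
  define T where "T = 2 * (KP * K)"
  have T0: "T \<ge> 0" unfolding T_def using KP_nonneg K0 by simp
  have KK0: "0 \<le> KP * K / m" using KP_nonneg K0 m0 by simp
  have Ib: "m * cmod (Ix x j) \<le> T" if j: "j \<le> 2" for j
  proof -
    have hi: "((\<lambda>t. ee x t * g j t) has_integral Ix x j) {-1..1}"
    proof -
      have "j = 0 \<or> j = 1 \<or> j = 2" using j by auto
      thus ?thesis using I_hasint0 I1(1) I2(1) by auto
    qed
    have "cmod (Ix x j) \<le> 2 * (KP * K / m)"
    proof (rule I_bound[OF hi _ KK0])
      fix t :: real assume "t \<in> {-1..1}"
      hence t: "\<bar>t\<bar> \<le> 1" by auto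
      have "m * cmod (g j t) \<le> KP * K" by (rule gB[OF j t])
      hence "cmod (g j t) \<le> KP * K / m" using m0 by (simp add: le_divide_eq mult.commute)
      thus "cmod (ee x t * g j t) \<le> KP * K / m" by (simp add: norm_mult norm_ee)
    qed
    thus ?thesis unfolding T_def using m0 by (simp add: le_divide_eq mult.commute)
  qed
  have I3b: "m * h * cmod (Ix x 3) \<le> T"
  proof -
    have KK1: "0 \<le> KP * K / (m * h)" using KP_nonneg K0 m0 hpos by simp
    have "cmod (Ix x 3) \<le> 2 * (KP * K / (m * h))"
    proof (rule I_bound[OF I3(1) _ KK1])
      fix t :: real assume "t \<in> {-1..1}"
      hence t: "\<bar>t\<bar> \<le> 1" by auto
      have "(m * h) * cmod (g 3 t) \<le> KP * K" by (rule g3B[OF t])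
      hence "cmod (g 3 t) \<le> KP * K / (m * h)" using m0 hpos by (simp add: le_divide_eq mult.commute)
      thus "cmod (ee x t * g 3 t) \<le> KP * K / (m * h)" by (simp add: norm_mult norm_ee)
    qed
    thus ?thesis unfolding T_def using m0 hpos by (simp add: le_divide_eq mult.commute)
  qed
  define a where "a = h powr \<alpha> * L (1 / h)"
  define i0 where "i0 = cmod (Ix x 0)"
  define X where "X = \<bar>x\<bar>"
  have a0: "0 \<le> a" unfolding a_def using L0 by simp
  have aB: "a \<le> (2 / B) * m" unfolding a_def m_def by (rule AL)
  have i00: "0 \<le> i0" unfolding i0_def by simp
  have kn: "cmod (Kn W k h x) = i0 / (2 * pi)" unfolding Kn_eq i0_def Ix_def by (simp add: norm_mult norm_divide)
  have hp: "h powr (\<alpha> + 1) * L (1 / h) = a * h" unfolding a_def using hpos by (simp add: powr_add)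
  have lhs: "h powr \<alpha> * L (1 / h) * cmod (Kn W k h x) + h powr (\<alpha> + 1) * L (1 / h) * cmod (complex_of_real x * Kn W k h x)
      = (a * i0 + a * h * (X * i0)) / (2 * pi)"
    unfolding hp kn unfolding a_def[symmetric] X_def by (simp add: norm_mult add_divide_distrib kn)
  have pi1: "1 \<le> 2 * pi" using pi_gt3 by simp
  have Bp: "B > 0" by (rule B_pos)
  have aI: "a * y \<le> (2 / B) * T" if y: "0 \<le> y" "m * y \<le> T" for y
  proof -
    have "a * y \<le> (2 / B) * m * y" using aB y by (intro mult_right_mono) auto
    also have "\<dots> = (2 / B) * (m * y)" by simp
    also have "\<dots> \<le> (2 / B) * T" using y Bp by (intro mult_left_mono) auto
    finally show ?thesis .
  qed
  have C_eq: "8 * KP * K / B = 4 * T / B" unfolding T_def by simp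
  show ?thesis
  proof (cases "X \<le> 1")
    case True
    have mx: "max 1 (x\<^sup>2) = 1" using True unfolding X_def by (simp add: abs_le_square_iff power_le_one_iff abs_square_le_1)
    have hX: "h * X \<le> 1" using True h1 hpos unfolding X_def by (simp add: mult_le_one)
    have "a * h * (X * i0) = a * i0 * (h * X)" by (simp add: ac_simps)
    also have "\<dots> \<le> a * i0 * 1" using hX a0 i00 by (intro mult_left_mono) auto
    finally have s1: "a * i0 + a * h * (X * i0) \<le> 2 * (a * i0)" by simp
    have "m * i0 \<le> T" using Ib[of 0] unfolding i0_def by simp
    hence s2: "a * i0 \<le> (2 / B) * T" by (rule aI[OF i00])
    have "(a * i0 + a * h * (X * i0)) / (2 * pi) \<le> a * i0 + a * h * (X * i0)"
      using pi1 a0 i00 hpos X_def by (intro divide_le_self) (auto intro!: add_nonneg_nonneg mult_nonneg_nonneg)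
    also have "\<dots> \<le> 4 * T / B" using s1 s2 by simp
    finally show ?thesis unfolding lhs C_eq mx by simp
  next
    case False
    hence X1: "X > 1" by simp
    have "\<bar>1\<bar> \<le> \<bar>x\<bar>" using X1 unfolding X_def by simp
    hence "1 \<le> x\<^sup>2" unfolding abs_le_square_iff by simp
    hence mx: "max 1 (x\<^sup>2) = X\<^sup>2" unfolding X_def by simp
    have X0: "X\<^sup>2 > 0" using X1 by simp
    have i2: "cmod (Ix x 2) = X\<^sup>2 * i0" unfolding I2(2) I1(2) i0_def X_def by (simp add: norm_mult power2_eq_square)
    have i3: "cmod (Ix x 3) = X\<^sup>2 * (X * i0)" unfolding I3(2) I2(2) I1(2) i0_def X_def by (simp add: norm_mult power2_eq_square)
    have t1: "X\<^sup>2 * (a * i0) \<le> (2 / B) * T" using aI[of "cmod (Ix x 2)"] Ib[of 2] i00 unfolding i2 by (simp add: ac_simps)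
    have t2: "X\<^sup>2 * (a * h * (X * i0)) \<le> (2 / B) * T"
    proof -
      have nn: "0 \<le> X * (h * (i0 * X\<^sup>2))" using i00 hpos X1 by simp
      show ?thesis using aI[of "h * cmod (Ix x 3)"] I3b hpos nn unfolding i3 by (simp add: ac_simps)
    qed
    have "X\<^sup>2 * ((a * i0 + a * h * (X * i0)) / (2 * pi)) \<le> X\<^sup>2 * (a * i0 + a * h * (X * i0))"
      using pi1 a0 i00 hpos X_def X0
      by (intro mult_left_mono divide_le_self) (auto intro!: add_nonneg_nonneg mult_nonneg_nonneg)
    also have "\<dots> \<le> 4 * T / B"
    proof -
      have "X\<^sup>2 * (a * i0 + a * h * (X * i0)) = X\<^sup>2 * (a * i0) + X\<^sup>2 * (a * h * (X * i0))" by (simp add: algebra_simps)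
      also have "\<dots> \<le> (2 / B) * T + (2 / B) * T" using t1 t2 by (rule add_mono)
      also have "\<dots> = 4 * T / B" by simp
      finally show ?thesis .
    qed
    finally have "X\<^sup>2 * ((a * i0 + a * h * (X * i0)) / (2 * pi)) \<le> 4 * T / B" .
    hence "((a * i0 + a * h * (X * i0)) / (2 * pi)) * X\<^sup>2 \<le> 4 * T / B" by (simp only: mult.commute)
    hence "(a * i0 + a * h * (X * i0)) / (2 * pi) \<le> 4 * T / B / X\<^sup>2" by (subst pos_le_divide_eq[OF X0])
    thus ?thesis unfolding lhs C_eq mx by simp
  qed
qed

end

context L5G begin

lemma final:
  "\<exists>C. \<forall>\<^sub>F h in at_right 0. \<forall>x::real.
     h powr \<alpha> * L (1 / h) * cmod (Kn W k h x)
       + h powr (\<alpha> + 1) * L (1 / h) * cmod (complex_of_real x * Kn W k h x)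
     \<le> C * (1 / max 1 (x\<^sup>2))"
proof -
  obtain K R where R1: "R \<ge> 1" and KR: "\<forall>r \<ge> R. \<forall>t. \<bar>t\<bar> \<le> 1 \<longrightarrow>
     exp (Re (psi k r) - Re (psi k (r * t))) * (r / (1 + r * \<bar>t\<bar>))\<^sup>2 \<le> K"
    using key by blast
  define C where "C = 8 * (dB * (21 * (1 + c) ^ 3)) * K / B"
  have ev_top: "\<forall>\<^sub>F v in at_top. (L v > 0 \<and> L v \<le> (2 / B) * (v powr \<alpha> * cmod (phi k v))) \<and> v > R"
    by (rule eventually_conj[OF L_pos_ev eventually_gt_at_top])
  have ev1: "\<forall>\<^sub>F h in at_right (0::real). (L (inverse h) > 0 \<and> L (inverse h) \<le> (2 / B) * (inverse h powr \<alpha> * cmod (phi k (inverse h)))) \<and> inverse h > R"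
    using filterlim_iff[THEN iffD1, OF filterlim_inverse_at_top_right, rule_format, OF ev_top] .
  have "\<forall>\<^sub>F h in at_right (0::real). ((L (inverse h) > 0 \<and> L (inverse h) \<le> (2 / B) * (inverse h powr \<alpha> * cmod (phi k (inverse h)))) \<and> inverse h > R) \<and> 0 < h"
    by (rule eventually_conj[OF ev1 eventually_at_right_less])
  thus ?thesis
  proof (intro exI[of _ C], rule eventually_mono, intro allI)
    fix h x :: real
    assume H: "((L (inverse h) > 0 \<and> L (inverse h) \<le> (2 / B) * (inverse h powr \<alpha> * cmod (phi k (inverse h)))) \<and> inverse h > R) \<and> 0 < h"
    have hpos: "h > 0" using H by simp
    have ih: "inverse h = 1 / h" by (simp add: inverse_eq_divide)
    have Lp: "L (1 / h) > 0" and Lb: "L (1 / h) \<le> (2 / B) * ((1 / h) powr \<alpha> * cmod (phi k (1 / h)))" and hR: "1 / h > R"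
      using H unfolding ih by auto
    have h1: "h \<le> 1"
    proof -
      have "1 < 1 / h" using hR R1 by simp
      thus ?thesis using hpos by (simp add: divide_less_eq)
    qed
    have LH: "L5H \<alpha> \<epsilon> F c L B W D h" unfolding L5H_def L5H_axioms_def using L5G_axioms hpos by simp
    have AL: "h powr \<alpha> * L (1 / h) \<le> (2 / B) * cmod (phi k (1 / h))"
    proof -
      have hp0: "0 \<le> h powr \<alpha>" by simp
      have "h powr \<alpha> * L (1 / h) \<le> h powr \<alpha> * ((2 / B) * ((1 / h) powr \<alpha> * cmod (phi k (1 / h))))"
        using Lb hp0 by (rule mult_left_mono)
      also have "\<dots> = (2 / B) * ((h powr \<alpha> * (1 / h) powr \<alpha>) * cmod (phi k (1 / h)))" by (simp add: ac_simps)
      also have "h powr \<alpha> * (1 / h) powr \<alpha> = 1" using hpos by (simp add: powr_mult[symmetric])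
      finally show ?thesis by simp
    qed
    have Kb: "\<forall>t. \<bar>t\<bar> \<le> 1 \<longrightarrow> exp (Re (psi k (1 / h)) - Re (psi k (1 / h * t))) * ((1 / h) / (1 + 1 / h * \<bar>t\<bar>))\<^sup>2 \<le> K"
    proof (intro allI impI)
      fix t :: real assume t: "\<bar>t\<bar> \<le> 1"
      have r: "1 / h \<ge> R" using hR by simp
      show "exp (Re (psi k (1 / h)) - Re (psi k (1 / h * t))) * ((1 / h) / (1 + 1 / h * \<bar>t\<bar>))\<^sup>2 \<le> K"
        using KR[rule_format, OF r t] .
    qed
    note M = L5H.main_h[OF LH Kb h1 AL less_imp_le[OF Lp], unfolded L5H.KP_def[OF LH], of x]
    show "h powr \<alpha> * L (1 / h) * cmod (Kn W k h x) + h powr (\<alpha> + 1) * L (1 / h) * cmod (complex_of_real x * Kn W k h x)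
      \<le> C * (1 / max 1 (x\<^sup>2))" unfolding C_def by (rule M)
  qed
qed

end

theorem lemmaL5:
  fixes \<alpha> \<epsilon> B :: real and F :: "real measure" and W L :: "real \<Rightarrow> real" and p :: nat
  assumes F_prob: "prob_space F" and F_sets: "sets F = sets borel"
    and F_pos: "measure F {..0} = 0"
    and cond_i: "\<epsilon> > 0"
       "set_integrable lborel {0<..} (\<lambda>x. max 1 (\<bar>x\<bar> powr (2 + \<epsilon>)) * kfun \<alpha> F x)"
    and cond_ii: "kfun \<alpha> F 0 = \<alpha>" "2 < \<alpha>"
    and cond_iv: "\<exists>c. \<forall>u. cmod (phik (kfun \<alpha> F) u) \<le> c / (1 + \<bar>u\<bar>)
        \<and> cmod (vector_derivative (phik (kfun \<alpha> F)) (at u)) \<le> c / (1 + \<bar>u\<bar>)\<^sup>2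
        \<and> cmod (vector_derivative (\<lambda>v. vector_derivative (phik (kfun \<alpha> F)) (at v)) (at u))
            \<le> c / (1 + \<bar>u\<bar>)\<^sup>2"
    and cond_v: "integrable lborel W" "(LINT x|lborel. W x) = 1"
       "integrable lborel (\<lambda>x. \<bar>x\<bar> ^ (p + 1) * \<bar>W x\<bar>)"
       "\<And>l. 1 \<le> l \<Longrightarrow> l \<le> p \<Longrightarrow> (LINT x|lborel. x ^ l * W x) = 0"
       "\<And>u. \<bar>u\<bar> > 1 \<Longrightarrow> ftW W u = 0"
       "\<exists>D :: nat \<Rightarrow> real \<Rightarrow> complex. D 0 = ftW W
          \<and> (\<forall>j<3. \<forall>u. (D j has_vector_derivative D (Suc j) u) (at u))
          \<and> continuous_on UNIV (D 3)"
    and L_nonneg: "\<And>t. t > 1 \<Longrightarrow> L t \<ge> 0"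
    and L_sv: "slowly_varying L"
    and B_pos: "B > 0"
    and L_B: "((\<lambda>t. \<bar>t\<bar> powr \<alpha> * cmod (phi (kfun \<alpha> F) t) / L \<bar>t\<bar>) \<longlongrightarrow> B) at_infinity"
  shows "\<exists>C. \<forall>\<^sub>F h in at_right 0. \<forall>x::real.
     h powr \<alpha> * L (1 / h) * cmod (Kn W (kfun \<alpha> F) h x)
       + h powr (\<alpha> + 1) * L (1 / h) * cmod (complex_of_real x * Kn W (kfun \<alpha> F) h x)
     \<le> C * (1 / max 1 (x\<^sup>2))"
proof -
  from cond_iv obtain c where cb: "\<And>u. cmod (phik (kfun \<alpha> F) u) \<le> c / (1 + \<bar>u\<bar>)
        \<and> cmod (vector_derivative (phik (kfun \<alpha> F)) (at u)) \<le> c / (1 + \<bar>u\<bar>)\<^sup>2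
        \<and> cmod (vector_derivative (\<lambda>v. vector_derivative (phik (kfun \<alpha> F)) (at v)) (at u))
            \<le> c / (1 + \<bar>u\<bar>)\<^sup>2" by blast
  from cond_v(6) obtain D :: "nat \<Rightarrow> real \<Rightarrow> complex" where D: "D 0 = ftW W"
    "\<forall>j<3. \<forall>u. (D j has_vector_derivative D (Suc j) u) (at u)" "continuous_on UNIV (D 3)" by blast
  have l5: "L5 \<alpha> \<epsilon> F"
    unfolding L5_def using F_prob F_sets cond_i cond_ii by simp
  have l5c: "L5c \<alpha> \<epsilon> F c"
    unfolding L5c_def L5c_axioms_def
  proof (intro conjI l5 allI)
    fix u
    show "cmod (phik (kfun \<alpha> F) u) \<le> c / (1 + \<bar>u\<bar>)" using cb[of u] by simp
    show "cmod (p1 (kfun \<alpha> F) u) \<le> c / (1 + \<bar>u\<bar>)\<^sup>2" using cb[of u] L5.vd1[OF l5, of u] by simp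
    show "cmod (p2 (kfun \<alpha> F) u) \<le> c / (1 + \<bar>u\<bar>)\<^sup>2" using cb[of u] L5.vd2[OF l5, of u] by simp
  qed
  have l5p: "L5P \<alpha> \<epsilon> F c L B"
    unfolding L5P_def L5P_axioms_def using l5c L_nonneg L_sv B_pos L_B by simp
  have l5g: "L5G \<alpha> \<epsilon> F c L B W D"
    unfolding L5G_def L5G_axioms_def using l5p D cond_v(5) by simp
  show ?thesis by (rule L5G.final[OF l5g])
qed

end
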